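(* The binary (i.e., $2$-ary) unbiased black-box complexity of the $\mathrm{DLB}$ problem is $O(n\log n)$.
   Context: Let $n$ be an even positive integer. For $x\in\{0,1\}^n$ consider the blocks $(x_{2\ell+1},x_{2\ell+2})$, $\ell=0,\dots,\frac n2-1$. If $x\neq(1,\dots,1)$, let $m$ be the smallest $\ell$ with $x_{2\ell+1}\neq 1$ or $x_{2\ell+2}\neq 1$, and define $\mathrm{DLB}(x)=2m+1$ if $x_{2m+1}+x_{2m+2}=0$ and $\mathrm{DLB}(x)=2m$ if $x_{2m+1}+x_{2m+2}=1$; set $\mathrm{DLB}(1,\dots,1)=n$. The $\mathrm{DLB}$ problem is to maximize $\mathrm{DLB}$. A $k$-ary variation operator $V$ assigns to each $k$-tuple $(x^1,\dots,x^k)$ of bit strings a probability distribution on $\{0,1\}^n$; it is unbiased if for all $x^1,\dots,x^k,y,z\in\{0,1\}^n$, $\Pr[y=V(x^1,\dots,x^k)]=\Pr[y\oplus z=V(x^1\oplus z,\dots,x^k\oplus z)]$, and for all permutations $\sigma$ of $[1..n]$, $\Pr[y=V(x^1,\dots,x^k)]=\Pr[\sigma(y)=V(\sigma(x^1),\dots,\sigma(x^k))]$, where $\sigma(x)=(x_{\sigma(1)},\dots,x_{\sigma(n)})$. A $k$-ary unbiased black-box algorithm generates $x^{(0)}$ uniformly at random; for $t=1,2,\dots$, based solely on $(f(x^{(0)}),\dots,f(x^{(t-1)}))$, it chooses a $k$-ary unbiased variation operator $V$ and indices $i_1,\dots,i_k\in[0..t-1]$ and samples $x^{(t)}\sim V(x^{(i_1)},\dots,x^{(i_k)})$;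 each search point is evaluated when generated. The runtime is the number of fitness evaluations until (and including) the first evaluation of an optimum. The $k$-ary unbiased black-box complexity of $\mathrm{DLB}$ is the infimum over all $k$-ary unbiased black-box algorithms of the expected runtime on $\mathrm{DLB}$. *)

theory Defs
  imports "HOL-Probability.Probability_Mass_Function" "HOL-Combinatorics.Permutations"
begin

text \<open>Bit strings of length n are bool lists of length n; True = 1, False = 0.
  Position i (1-based in the paper) is list index i-1.\<close>

definition bitstrings :: "nat \<Rightarrow> bool list set" where
  "bitstrings n = {x. length x = n}"

definition DLB :: "nat \<Rightarrow> bool list \<Rightarrow> nat" where
  "DLB n x =
     (if x = replicate n True then n
      else (let m = (LEAST l. \<not> (x ! (2*l) \<and> x ! (2*l+1))) in
            if \<not> x ! (2*m) \<and> \<not> x ! (2*m+1) then 2*m+1 else 2*m))"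

definition xor_bits :: "bool list \<Rightarrow> bool list \<Rightarrow> bool list" where
  "xor_bits x z = map2 (\<noteq>) x z"

definition perm_bits :: "nat \<Rightarrow> (nat \<Rightarrow> nat) \<Rightarrow> bool list \<Rightarrow> bool list" where
  "perm_bits n \<sigma> x = map (\<lambda>i. x ! \<sigma> i) [0..<n]"

definition unbiased_op :: "nat \<Rightarrow> nat \<Rightarrow> (bool list list \<Rightarrow> bool list pmf) \<Rightarrow> bool" where
  "unbiased_op n k V \<longleftrightarrow>
     (\<forall>xs. length xs = k \<and> set xs \<subseteq> bitstrings n \<longrightarrow> set_pmf (V xs) \<subseteq> bitstrings n) \<and>
     (\<forall>xs y z. length xs = k \<and> set xs \<subseteq> bitstrings n \<and> y \<in> bitstrings n \<and> z \<in> bitstrings n \<longrightarrow>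
        pmf (V xs) y = pmf (V (map (\<lambda>x. xor_bits x z) xs)) (xor_bits y z)) \<and>
     (\<forall>xs y \<sigma>. length xs = k \<and> set xs \<subseteq> bitstrings n \<and> y \<in> bitstrings n \<and> \<sigma> permutes {..<n} \<longrightarrow>
        pmf (V xs) y = pmf (V (map (perm_bits n \<sigma>) xs)) (perm_bits n \<sigma> y))"

text \<open>A k-ary unbiased black-box algorithm (for length n): given the fitness history
  (f(x^(0)),...,f(x^(t-1))), t >= 1, it chooses an unbiased k-ary operator V and
  indices i_1..i_k in [0..t-1].\<close>
type_synonym algorithm = "nat list \<Rightarrow> (bool list list \<Rightarrow> bool list pmf) \<times> nat list"

definition valid_alg :: "nat \<Rightarrow> nat \<Rightarrow> algorithm \<Rightarrow> bool" where
  "valid_alg n k A \<longleftrightarrow>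
     (\<forall>h. h \<noteq> [] \<longrightarrow> unbiased_op n k (fst (A h)) \<and> length (snd (A h)) = k \<and>
                       (\<forall>i\<in>set (snd (A h)). i < length h))"

text \<open>Distribution of the first t+1 search points (x^(0),...,x^(t)).\<close>
primrec hist :: "nat \<Rightarrow> (bool list \<Rightarrow> nat) \<Rightarrow> algorithm \<Rightarrow> nat \<Rightarrow> bool list list pmf" where
  "hist n f A 0 = map_pmf (\<lambda>x. [x]) (pmf_of_set (bitstrings n))"
| "hist n f A (Suc t) = bind_pmf (hist n f A t)
     (\<lambda>xs. map_pmf (\<lambda>y. xs @ [y]) (fst (A (map f xs)) (map ((!) xs) (snd (A (map f xs))))))"

definition is_opt :: "nat \<Rightarrow> (bool list \<Rightarrow> nat) \<Rightarrow> bool list \<Rightarrow> bool" where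
  "is_opt n f x \<longleftrightarrow> x \<in> bitstrings n \<and> (\<forall>y\<in>bitstrings n. f y \<le> f x)"

text \<open>Expected runtime T (number of evaluations up to and including the first optimum),
  via E[T] = sum_{s>=0} P(T > s), where P(T > 0) = 1 and
  P(T > t+1) = P(none of x^(0),...,x^(t) is optimal).\<close>
definition exp_runtime :: "nat \<Rightarrow> (bool list \<Rightarrow> nat) \<Rightarrow> algorithm \<Rightarrow> ennreal" where
  "exp_runtime n f A =
     1 + (\<Sum>t. ennreal (measure_pmf.prob (hist n f A t) {xs. \<forall>x\<in>set xs. \<not> is_opt n f x}))"

definition unbiased_bbc :: "nat \<Rightarrow> nat \<Rightarrow> (bool list \<Rightarrow> nat) \<Rightarrow> ennreal" where
  "unbiased_bbc k n f = (INF A \<in> {A. valid_alg n k A}. exp_runtime n f A)"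

end

theory Submission
  imports Defs
begin

definition dset :: "nat \<Rightarrow> bool list \<Rightarrow> bool list \<Rightarrow> nat set" where
  "dset n u v = {i. i < n \<and> u!i \<noteq> v!i}"

definition Outs :: "nat \<Rightarrow> nat \<Rightarrow> nat \<Rightarrow> bool list \<Rightarrow> bool list \<Rightarrow> bool list set" where
  "Outs n a b u v = {w \<in> bitstrings n. card (dset n w u \<inter> dset n u v) = a \<and> card (dset n w u - dset n u v) = b}"

definition Fl :: "nat \<Rightarrow> nat \<Rightarrow> nat \<Rightarrow> bool list list \<Rightarrow> bool list pmf" where
  "Fl n a b xs = (if Outs n a b (xs!0) (xs!1) = {} then return_pmf (xs!0)
                  else pmf_of_set (Outs n a b (xs!0) (xs!1)))"

lemma finite_bitstrings: "finite (bitstrings n)"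
  unfolding bitstrings_def using finite_lists_length_eq[of "UNIV::bool set" n] by simp

lemma finite_Outs: "finite (Outs n a b u v)"
  by (rule finite_subset[OF _ finite_bitstrings[of n]]) (auto simp: Outs_def)

lemma Fl_general:
  assumes bij: "bij_betw T (bitstrings n) (bitstrings n)"
    and pres: "\<And>w. w \<in> bitstrings n \<Longrightarrow> (w \<in> Outs n a b u v \<longleftrightarrow> T w \<in> Outs n a b (T u) (T v))"
    and u: "u \<in> bitstrings n" and y: "y \<in> bitstrings n"
  shows "pmf (Fl n a b [u,v]) y = pmf (Fl n a b [T u, T v]) (T y)"
proof -
  have sub: "Outs n a b u v \<subseteq> bitstrings n" "Outs n a b (T u) (T v) \<subseteq> bitstrings n"
    by (auto simp: Outs_def)
  have img: "Outs n a b (T u) (T v) = T ` Outs n a b u v"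
  proof
    show "T ` Outs n a b u v \<subseteq> Outs n a b (T u) (T v)" using pres sub(1) by auto
    show "Outs n a b (T u) (T v) \<subseteq> T ` Outs n a b u v"
    proof
      fix w' assume w': "w' \<in> Outs n a b (T u) (T v)"
      then have "w' \<in> bitstrings n" using sub(2) by auto
      then obtain w where w: "w \<in> bitstrings n" "w' = T w" using bij by (auto simp: bij_betw_def)
      then show "w' \<in> T ` Outs n a b u v" using pres[OF w(1)] w' by auto
    qed
  qed
  have inj: "inj_on T (bitstrings n)" using bij by (auto simp: bij_betw_def)
  have inj2: "inj_on T (Outs n a b u v)" using inj_on_subset[OF inj sub(1)] .
  have card: "card (Outs n a b (T u) (T v)) = card (Outs n a b u v)"
    using img card_image[OF inj2] by simp
  have memb: "T y \<in> Outs n a b (T u) (T v) \<longleftrightarrow> y \<in> Outs n a b u v" using pres[OF y] by simp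
  show ?thesis
  proof (cases "Outs n a b u v = {}")
    case True
    then have "Outs n a b (T u) (T v) = {}" using img by simp
    moreover have "T y = T u \<longleftrightarrow> y = u" using inj u y by (auto simp: inj_on_def)
    ultimately show ?thesis using True by (auto simp add: Fl_def indicator_def)
  next
    case False
    then have "Outs n a b (T u) (T v) \<noteq> {}" using img by simp
    then show ?thesis using False card memb finite_Outs
      by (simp add: Fl_def pmf_of_set indicator_def)
  qed
qed

lemma xor_len: "length (xor_bits x z) = min (length x) (length z)"
  by (simp add: xor_bits_def)

lemma xor_nth: "i < length x \<Longrightarrow> i < length z \<Longrightarrow> xor_bits x z ! i = (x!i \<noteq> z!i)"
  by (simp add: xor_bits_def)

lemma xor_invol: "length x = length z \<Longrightarrow> xor_bits (xor_bits x z) z = x"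
  by (rule nth_equalityI) (auto simp: xor_len xor_nth)

lemma dset_xor: "length w = n \<Longrightarrow> length u = n \<Longrightarrow> length z = n \<Longrightarrow>
   dset n (xor_bits w z) (xor_bits u z) = dset n w u"
  by (auto simp: dset_def xor_nth)

lemma bij_xor: "z \<in> bitstrings n \<Longrightarrow> bij_betw (\<lambda>x. xor_bits x z) (bitstrings n) (bitstrings n)"
  apply (rule bij_betw_byWitness[where f'="\<lambda>x. xor_bits x z"])
  by (auto simp: bitstrings_def xor_invol xor_len)

lemma Fl_xor:
  assumes "u \<in> bitstrings n" "v \<in> bitstrings n" "y \<in> bitstrings n" "z \<in> bitstrings n"
  shows "pmf (Fl n a b [u,v]) y = pmf (Fl n a b [xor_bits u z, xor_bits v z]) (xor_bits y z)"
  apply (rule Fl_general[OF bij_xor[OF assms(4)] _ assms(1,3)])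
  using assms by (auto simp: Outs_def bitstrings_def xor_len dset_xor)

lemma perm_len: "length (perm_bits n \<sigma> x) = n" by (simp add: perm_bits_def)
lemma perm_nth: "i < n \<Longrightarrow> perm_bits n \<sigma> x ! i = x ! \<sigma> i" by (simp add: perm_bits_def)

lemma perm_inv_bits:
  assumes "\<sigma> permutes {..<n}" "length x = n"
  shows "perm_bits n (inv \<sigma>) (perm_bits n \<sigma> x) = x"
proof (rule nth_equalityI)
  show "length (perm_bits n (inv \<sigma>) (perm_bits n \<sigma> x)) = length x" using assms by (simp add: perm_len)
  fix i assume "i < length (perm_bits n (inv \<sigma>) (perm_bits n \<sigma> x))"
  then have i: "i < n" by (simp add: perm_len)
  have "inv \<sigma> i < n" using permutes_inv[OF assms(1)] i
    by (meson lessThan_iff permutes_in_image)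
  then show "perm_bits n (inv \<sigma>) (perm_bits n \<sigma> x) ! i = x ! i"
    using i by (simp add: perm_nth permutes_inverses(1)[OF assms(1)])
qed

lemma bij_perm: "\<sigma> permutes {..<n} \<Longrightarrow> bij_betw (perm_bits n \<sigma>) (bitstrings n) (bitstrings n)"
  apply (rule bij_betw_byWitness[where f'="perm_bits n (inv \<sigma>)"])
  using perm_inv_bits[of \<sigma> n] perm_inv_bits[of "inv \<sigma>" n] permutes_inv[of \<sigma> "{..<n}"]
    inv_inv_eq[of \<sigma>] permutes_bij[of \<sigma>]
  by (auto simp: bitstrings_def perm_len)

lemma card_perm_pre:
  assumes "\<sigma> permutes {..<n}" "X \<subseteq> {..<n}"
  shows "card {i. i < n \<and> \<sigma> i \<in> X} = card X"
proof -
  have "bij_betw \<sigma> {i. i < n \<and> \<sigma> i \<in> X} X"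
    unfolding bij_betw_def
  proof
    show "inj_on \<sigma> {i. i < n \<and> \<sigma> i \<in> X}" using permutes_inj[OF assms(1)] by (auto simp: inj_on_def inj_def)
    show "\<sigma> ` {i. i < n \<and> \<sigma> i \<in> X} = X"
    proof
      show "\<sigma> ` {i. i < n \<and> \<sigma> i \<in> X} \<subseteq> X" by auto
      show "X \<subseteq> \<sigma> ` {i. i < n \<and> \<sigma> i \<in> X}"
      proof
        fix x assume x: "x \<in> X"
        have "inv \<sigma> x < n" using permutes_inv[OF assms(1)] x assms(2)
          by (meson lessThan_iff permutes_in_image subsetD)
        moreover have "\<sigma> (inv \<sigma> x) = x" using permutes_inverses(1)[OF assms(1)] by simp
        ultimately show "x \<in> \<sigma> ` {i. i < n \<and> \<sigma> i \<in> X}" using x by (metis (mono_tags, lifting) image_eqI mem_Collect_eq)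
      qed
    qed
  qed
  then show ?thesis by (rule bij_betw_same_card)
qed

lemma Fl_perm:
  assumes "u \<in> bitstrings n" "v \<in> bitstrings n" "y \<in> bitstrings n" "\<sigma> permutes {..<n}"
  shows "pmf (Fl n a b [u,v]) y = pmf (Fl n a b [perm_bits n \<sigma> u, perm_bits n \<sigma> v]) (perm_bits n \<sigma> y)"
proof (rule Fl_general[OF bij_perm[OF assms(4)] _ assms(1,3)])
  fix w assume w: "w \<in> bitstrings n"
  have hs: "\<And>i. i < n \<Longrightarrow> \<sigma> i < n" using permutes_in_image[OF assms(4)] by simp
  have e1: "dset n (perm_bits n \<sigma> w) (perm_bits n \<sigma> u) \<inter> dset n (perm_bits n \<sigma> u) (perm_bits n \<sigma> v)
     = {i. i < n \<and> \<sigma> i \<in> dset n w u \<inter> dset n u v}" (is "?L = ?R")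
  proof (rule set_eqI)
    fix i show "i \<in> ?L \<longleftrightarrow> i \<in> ?R"
    proof (cases "i < n")
      case True then show ?thesis using hs[OF True] by (simp add: dset_def perm_nth)
    next
      case False then show ?thesis by (simp add: dset_def)
    qed
  qed
  have e2: "dset n (perm_bits n \<sigma> w) (perm_bits n \<sigma> u) - dset n (perm_bits n \<sigma> u) (perm_bits n \<sigma> v)
     = {i. i < n \<and> \<sigma> i \<in> dset n w u - dset n u v}" (is "?L = ?R")
  proof (rule set_eqI)
    fix i show "i \<in> ?L \<longleftrightarrow> i \<in> ?R"
    proof (cases "i < n")
      case True then show ?thesis using hs[OF True] by (simp add: dset_def perm_nth)
    next
      case False then show ?thesis by (simp add: dset_def)
    qed
  qed
  have s1: "dset n w u \<inter> dset n u v \<subseteq> {..<n}" "dset n w u - dset n u v \<subseteq> {..<n}" by (auto simp: dset_def)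
  have c1: "card (dset n (perm_bits n \<sigma> w) (perm_bits n \<sigma> u) \<inter> dset n (perm_bits n \<sigma> u) (perm_bits n \<sigma> v))
     = card (dset n w u \<inter> dset n u v)" unfolding e1 by (rule card_perm_pre[OF assms(4) s1(1)])
  have c2: "card (dset n (perm_bits n \<sigma> w) (perm_bits n \<sigma> u) - dset n (perm_bits n \<sigma> u) (perm_bits n \<sigma> v))
     = card (dset n w u - dset n u v)" unfolding e2 by (rule card_perm_pre[OF assms(4) s1(2)])
  have pw: "perm_bits n \<sigma> w \<in> bitstrings n" by (simp add: bitstrings_def perm_len)
  show "w \<in> Outs n a b u v \<longleftrightarrow> perm_bits n \<sigma> w \<in> Outs n a b (perm_bits n \<sigma> u) (perm_bits n \<sigma> v)"
    unfolding Outs_def mem_Collect_eq c1 c2 using w pw by simp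
qed

lemma len2: "length xs = 2 \<Longrightarrow> \<exists>u v. xs = [u,v]"
  by (cases xs; cases "tl xs") auto

lemma Fl_unbiased: "unbiased_op n 2 (Fl n a b)"
  unfolding unbiased_op_def
proof (intro conjI allI impI)
  fix xs :: "bool list list" assume h: "length xs = 2 \<and> set xs \<subseteq> bitstrings n"
  then obtain u v where xs: "xs = [u,v]" using len2 by blast
  then have "u \<in> bitstrings n" using h by simp
  then show "set_pmf (Fl n a b xs) \<subseteq> bitstrings n"
    using finite_Outs[of n a b u v] xs by (auto simp: Fl_def Outs_def)
next
  fix xs :: "bool list list" and y z
  assume h: "length xs = 2 \<and> set xs \<subseteq> bitstrings n \<and> y \<in> bitstrings n \<and> z \<in> bitstrings n"
  then obtain u v where xs: "xs = [u,v]" using len2 by blast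
  have "u \<in> bitstrings n" "v \<in> bitstrings n" using h xs by auto
  then have "pmf (Fl n a b [u,v]) y = pmf (Fl n a b [xor_bits u z, xor_bits v z]) (xor_bits y z)"
    using h Fl_xor by blast
  then show "pmf (Fl n a b xs) y = pmf (Fl n a b (map (\<lambda>x. xor_bits x z) xs)) (xor_bits y z)"
    using xs by simp
next
  fix xs :: "bool list list" and y \<sigma>
  assume h: "length xs = 2 \<and> set xs \<subseteq> bitstrings n \<and> y \<in> bitstrings n \<and> \<sigma> permutes {..<n}"
  then obtain u v where xs: "xs = [u,v]" using len2 by blast
  have "u \<in> bitstrings n" "v \<in> bitstrings n" using h xs by auto
  then have "pmf (Fl n a b [u,v]) y = pmf (Fl n a b [perm_bits n \<sigma> u, perm_bits n \<sigma> v]) (perm_bits n \<sigma> y)"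
    using h Fl_perm by blast
  then show "pmf (Fl n a b xs) y = pmf (Fl n a b (map (perm_bits n \<sigma>) xs)) (perm_bits n \<sigma> y)"
    using xs by simp
qed

lemma DLB_not_all:
  assumes len: "length y = n" and ev: "even n" and ne: "y \<noteq> replicate n True"
  shows "\<exists>l. 2*l+1 < n \<and> \<not> (y ! (2*l) \<and> y ! (2*l+1))"
proof -
  obtain i where i: "i < n" "\<not> y!i"
    using ne len by (metis (full_types) in_set_conv_nth replicate_eqI)
  define l where "l = i div 2"
  have "2*l+1 < n" using i(1) ev unfolding l_def by presburger
  moreover have "i = 2*l \<or> i = 2*l+1" unfolding l_def by presburger
  ultimately show ?thesis using i by blast
qed

lemma DLB_lt:
  assumes len: "length y = n" and ev: "even n" and ne: "y \<noteq> replicate n True"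
  shows "DLB n y < n"
proof -
  let ?P = "\<lambda>l. \<not> (y ! (2*l) \<and> y ! (2*l+1))"
  obtain l where l: "2*l+1 < n" "?P l" using DLB_not_all[OF assms] by blast
  have le: "(LEAST l. ?P l) \<le> l" using l(2) by (rule Least_le)
  have "DLB n y \<le> 2 * (LEAST l. ?P l) + 1" unfolding DLB_def Let_def using ne by auto
  then show ?thesis using le l(1) by linarith
qed

lemma DLB_all: "DLB n (replicate n True) = n" by (simp add: DLB_def)

lemma is_opt_DLB:
  assumes ev: "even n"
  shows "is_opt n (DLB n) x \<longleftrightarrow> x = replicate n True"
proof
  assume h: "is_opt n (DLB n) x"
  then have x: "length x = n" and le: "DLB n (replicate n True) \<le> DLB n x"
    by (auto simp: is_opt_def bitstrings_def)
  show "x = replicate n True"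
  proof (rule ccontr)
    assume "x \<noteq> replicate n True"
    then have "DLB n x < n" using DLB_lt[OF x ev] by simp
    then show False using le DLB_all[of n] by simp
  qed
next
  assume x: "x = replicate n True"
  have "\<forall>y\<in>bitstrings n. DLB n y \<le> n"
  proof
    fix y assume "y \<in> bitstrings n"
    then have "length y = n" by (simp add: bitstrings_def)
    then show "DLB n y \<le> n" using DLB_lt[of y n] ev DLB_all[of n] by (cases "y = replicate n True") auto
  qed
  then show "is_opt n (DLB n) x" using x DLB_all[of n] by (simp add: is_opt_def bitstrings_def)
qed

lemma DLB_prefix:
  assumes len: "length y = n" and ev: "even n" and mn: "2*m+2 \<le> n"
    and pre: "\<forall>i<2*m. y!i"
  shows "(y!(2*m) \<and> y!(2*m+1)) \<Longrightarrow> DLB n y \<ge> 2*m+2"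
    and "(\<not>y!(2*m) \<and> \<not>y!(2*m+1)) \<Longrightarrow> DLB n y = 2*m+1"
    and "(y!(2*m) \<noteq> y!(2*m+1)) \<Longrightarrow> DLB n y = 2*m"
proof -
  let ?P = "\<lambda>l. \<not> (y ! (2*l) \<and> y ! (2*l+1))"
  have notP: "\<not> ?P l" if "l < m" for l using pre that by auto
  {
    assume b: "y!(2*m) \<and> y!(2*m+1)"
    show "DLB n y \<ge> 2*m+2"
    proof (cases "y = replicate n True")
      case True then show ?thesis using mn by (simp add: DLB_def)
    next
      case False
      obtain l where l: "?P l" using DLB_not_all[OF len ev False] by blast
      have P: "?P (LEAST l. ?P l)" using l by (rule LeastI)
      have "(LEAST l. ?P l) \<ge> m+1"
      proof (rule ccontr)
        assume "\<not> (LEAST l. ?P l) \<ge> m+1"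
        then have "(LEAST l. ?P l) < m \<or> (LEAST l. ?P l) = m" by linarith
        then show False using P notP b by auto
      qed
      moreover have "DLB n y \<ge> 2 * (LEAST l. ?P l)" unfolding DLB_def Let_def using False by auto
      ultimately show ?thesis by linarith
    qed
  }
  {
    assume b: "\<not>y!(2*m) \<and> \<not>y!(2*m+1)"
    have ne: "y \<noteq> replicate n True" using b mn by auto
    have L: "(LEAST l. ?P l) = m"
      by (rule Least_equality) (use b notP in \<open>auto simp: not_less[symmetric]\<close>)
    show "DLB n y = 2*m+1" unfolding DLB_def Let_def using ne L b by simp
  }
  {
    assume b: "y!(2*m) \<noteq> y!(2*m+1)"
    have ne: "y \<noteq> replicate n True" using b mn by auto
    have L: "(LEAST l. ?P l) = m"
      by (rule Least_equality) (use b notP in \<open>auto simp: not_less[symmetric]\<close>)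
    show "DLB n y = 2*m" unfolding DLB_def Let_def using ne L b by auto
  }
qed

definition zf :: "nat \<Rightarrow> nat \<Rightarrow> nat" where
  "zf m fu = (if fu = 2*m+1 then 2 else if fu = 2*m then 1 else 0)"

datatype st = Init nat | Done | Srch nat bool nat nat nat nat nat nat nat nat nat

function sp :: "nat \<Rightarrow> nat \<Rightarrow> bool \<Rightarrow> nat \<Rightarrow> nat \<Rightarrow> nat \<Rightarrow> nat \<Rightarrow> nat \<Rightarrow> nat \<Rightarrow> st" where
  "sp n m side ix fx iy fy ixd fxd = (if n \<le> 2*m then Done else
    (if zf m (if side then fy else fx) = 0 \<or> n - 2*m = zf m (if side then fy else fx) then
       (if side then sp n (m+1) False ixd fxd
              (if zf m fy = 0 then iy else ix) (if zf m fy = 0 then fy else fx) 0 0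
        else sp n m True ix fx iy fy
              (if zf m fx = 0 then ix else iy) (if zf m fx = 0 then fx else fy))
     else Srch m side ix fx iy fy ixd fxd (if side then ix else iy) (n-2*m) (zf m (if side then fy else fx))))"
  by pat_completeness auto
termination
  by (relation "Wellfounded.measure (\<lambda>(n,m,side,_). 2*(n-2*m) + (if side then 0 else 1))") auto

definition step :: "nat \<Rightarrow> st \<Rightarrow> nat \<Rightarrow> nat \<Rightarrow> st" where
  "step n \<sigma> t ft = (case \<sigma> of
     Init f0 \<Rightarrow> sp n 0 False 0 f0 1 ft 0 0
   | Done \<Rightarrow> Done
   | Srch m side ix fx iy fy ixd fxd ic c z \<Rightarrow>
       (if 2*m+2 \<le> ft then
          (if (c+1) div 2 = z then
             (if side then sp n (m+1) False ixd fxd t ft 0 0 else sp n m True ix fx iy fy t ft)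
           else Srch m side ix fx iy fy ixd fxd t ((c+1) div 2) z)
        else \<sigma>))"

definition stp :: "nat \<Rightarrow> st \<times> nat \<Rightarrow> nat \<Rightarrow> st \<times> nat" where
  "stp n p a = (step n (fst p) (snd p) a, Suc (snd p))"

definition S :: "nat \<Rightarrow> nat list \<Rightarrow> st" where
  "S n h = (case h of [] \<Rightarrow> Done | f0 # rest \<Rightarrow> fst (foldl (stp n) (Init f0, 1) rest))"

lemma snd_foldl_stp: "snd (foldl (stp n) p rest) = snd p + length rest"
  by (induction rest arbitrary: p) (auto simp: stp_def)

lemma S_single: "S n [a] = Init a" by (simp add: S_def)

lemma S_snoc: "h \<noteq> [] \<Longrightarrow> S n (h @ [a]) = step n (S n h) (length h) a"
proof -
  assume "h \<noteq> []"
  then obtain f0 rest where h: "h = f0 # rest" by (cases h) auto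
  have "foldl (stp n) (Init f0, 1) (rest @ [a]) = stp n (foldl (stp n) (Init f0, 1) rest) a" by simp
  then show ?thesis using snd_foldl_stp[of n "(Init f0, 1)" rest] h
    by (simp add: S_def stp_def)
qed

definition act :: "nat \<Rightarrow> st \<Rightarrow> (bool list list \<Rightarrow> bool list pmf) \<times> nat list" where
  "act n \<sigma> = (case \<sigma> of
     Init f0 \<Rightarrow> (Fl n 0 n, [0,0])
   | Done \<Rightarrow> (Fl n 0 0, [0,0])
   | Srch m side ix fx iy fy ixd fxd ic c z \<Rightarrow> (Fl n ((c+1) div 2) 0, [if side then iy else ix, ic]))"

definition Alg :: "nat \<Rightarrow> algorithm" where
  "Alg n h = (if (\<forall>i\<in>set (snd (act n (S n h))). i < length h) then act n (S n h) else (Fl n 0 0, [0,0]))"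

lemma act_fst: "\<exists>a b. fst (act n \<sigma>) = Fl n a b"
  by (cases \<sigma>) (auto simp: act_def)

lemma act_len: "length (snd (act n \<sigma>)) = 2"
  by (cases \<sigma>) (auto simp: act_def)

lemma valid_Alg: "valid_alg n 2 (Alg n)"
  unfolding valid_alg_def
proof (intro allI impI conjI)
  fix h :: "nat list" assume h: "h \<noteq> []"
  have "\<exists>a b. fst (Alg n h) = Fl n a b"
    using act_fst[of n "S n h"] unfolding Alg_def by auto
  then show "unbiased_op n 2 (fst (Alg n h))" using Fl_unbiased by auto
  show "length (snd (Alg n h)) = 2"
    unfolding Alg_def using act_len by auto
  show "\<forall>i\<in>set (snd (Alg n h)). i < length h"
    unfolding Alg_def using h by auto
qed

function hv :: "nat \<Rightarrow> nat \<Rightarrow> nat" where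
  "hv c z = (if c \<le> z \<or> c \<le> 1 then 0 else Suc (hv ((c+1) div 2) z))"
  by pat_completeness auto
termination by (relation "Wellfounded.measure fst") auto

declare hv.simps[simp del]

lemma hv_0: "c \<le> z \<or> c \<le> 1 \<Longrightarrow> hv c z = 0" by (subst hv.simps) simp
lemma hv_S: "\<not> (c \<le> z \<or> c \<le> 1) \<Longrightarrow> hv c z = Suc (hv ((c+1) div 2) z)" by (subst hv.simps) simp

lemma hv_mono: "c \<le> c' \<Longrightarrow> hv c z \<le> hv c' z"
proof (induction c' arbitrary: c rule: less_induct)
  case (less c')
  show ?case
  proof (cases "c \<le> z \<or> c \<le> 1")
    case True then show ?thesis by (simp add: hv_0)
  next
    case False
    then have F: "\<not> (c' \<le> z \<or> c' \<le> 1)" using less.prems by auto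
    have "hv ((c+1) div 2) z \<le> hv ((c'+1) div 2) z"
      using less.IH[of "(c'+1) div 2" "(c+1) div 2"] less.prems False by auto
    then show ?thesis using hv_S[OF False] hv_S[OF F] by simp
  qed
qed

lemma hv_anti: "1 \<le> z \<Longrightarrow> hv c z \<le> hv c 1"
proof (induction c rule: less_induct)
  case (less c)
  show ?case
  proof (cases "c \<le> z \<or> c \<le> 1")
    case True then show ?thesis by (simp add: hv_0)
  next
    case False
    then have F: "\<not> (c \<le> 1 \<or> c \<le> 1)" using less.prems by auto
    have "(c+1) div 2 < c" using False by auto
    then show ?thesis using less.IH[of "(c+1) div 2"] less.prems hv_S[OF False] hv_S[OF F] by simp
  qed
qed

lemma hv_step: "1 \<le> z \<Longrightarrow> z < c \<Longrightarrow> hv c z = Suc (hv ((c+1) div 2) z)"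
  by (rule hv_S) auto

lemma hv_zero: "hv z z = 0" by (simp add: hv_0)

lemma hv_pow: "2 \<le> c \<Longrightarrow> 2 ^ hv c 1 \<le> 2*c - 2"
proof (induction c rule: less_induct)
  case (less c)
  show ?case
  proof (cases "c = 2")
    case True
    have "hv 2 1 = Suc (hv 1 1)" using hv_S[of 2 1] by simp
    then show ?thesis using True by (simp add: hv_0)
  next
    case False
    then have c3: "c \<ge> 3" using less.prems by auto
    have "hv c 1 = Suc (hv ((c+1) div 2) 1)" using c3 by (intro hv_S) auto
    moreover have "2 ^ hv ((c+1) div 2) 1 \<le> 2*((c+1) div 2) - 2" using less.IH[of "(c+1) div 2"] c3 by auto
    ultimately show ?thesis by auto
  qed
qed

declare sp.simps[simp del]

definition pairInv :: "nat \<Rightarrow> nat \<Rightarrow> bool list \<Rightarrow> bool list \<Rightarrow> bool" where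
  "pairInv n m x y = (length x = n \<and> length y = n \<and> (\<forall>i<2*m. x!i \<and> y!i) \<and> (\<forall>i. 2*m \<le> i \<and> i < n \<longrightarrow> x!i \<noteq> y!i))"

definition Zs :: "nat \<Rightarrow> bool list \<Rightarrow> nat set" where
  "Zs m u = {i. (i = 2*m \<or> i = 2*m+1) \<and> \<not> u!i}"

definition Ws :: "nat \<Rightarrow> bool list \<Rightarrow> nat set" where
  "Ws m u = {i. (i = 2*m \<or> i = 2*m+1) \<and> u!i}"

definition bset :: "nat \<Rightarrow> bool list \<Rightarrow> bool list" where
  "bset m x = x[2*m := True, 2*m+1 := True]"

definition searchInv :: "nat \<Rightarrow> nat \<Rightarrow> bool list \<Rightarrow> bool list \<Rightarrow> nat \<Rightarrow> nat \<Rightarrow> bool" where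
  "searchInv n m u w c z = (dset n u w \<subseteq> {2*m..<n} \<and> card (dset n u w) = c \<and> Zs m u \<subseteq> dset n u w \<and>
      (dset n u w = {2*m..<n} \<or> dset n u w \<inter> Ws m u = {}) \<and> z = card (Zs m u) \<and> 0 < z \<and> z < c)"

definition SInv :: "nat \<Rightarrow> bool list list \<Rightarrow> nat \<Rightarrow> bool \<Rightarrow> nat \<Rightarrow> nat \<Rightarrow> nat \<Rightarrow> nat \<Rightarrow> nat \<Rightarrow> nat \<Rightarrow> nat \<Rightarrow> nat \<Rightarrow> nat \<Rightarrow> bool" where
  "SInv n xs m side ix fx iy fy ixd fxd ic c z = (2*m+2 \<le> n \<and> ix < length xs \<and> iy < length xs \<and> ic < length xs \<and>
     pairInv n m (xs!ix) (xs!iy) \<and> fx = DLB n (xs!ix) \<and> fy = DLB n (xs!iy) \<and>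
     (side \<longrightarrow> ixd < length xs \<and> xs!ixd = bset m (xs!ix) \<and> fxd = DLB n (xs!ixd)) \<and>
     searchInv n m (if side then xs!iy else xs!ix) (xs!ic) c z)"

definition Inv :: "nat \<Rightarrow> bool list list \<Rightarrow> st \<Rightarrow> bool" where
  "Inv n xs \<sigma> = ((\<forall>x\<in>set xs. length x = n) \<and> (case \<sigma> of
      Init f0 \<Rightarrow> length xs = 1 \<and> f0 = DLB n (xs!0)
    | Done \<Rightarrow> replicate n True \<in> set xs
    | Srch m side ix fx iy fy ixd fxd ic c z \<Rightarrow> SInv n xs m side ix fx iy fy ixd fxd ic c z))"

definition HH :: "nat \<Rightarrow> nat" where "HH n = hv n 1"
definition KK :: "nat \<Rightarrow> nat" where "KK n = n div 2"

definition Psi :: "nat \<Rightarrow> st \<Rightarrow> nat" where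
  "Psi n \<sigma> = (case \<sigma> of Init f0 \<Rightarrow> 16 * HH n * KK n + 1 | Done \<Rightarrow> 0
     | Srch m side ix fx iy fy ixd fxd ic c z \<Rightarrow> 8 * (hv c z + (if side then 0 else HH n) + 2 * HH n * (KK n - m - 1)))"

definition Bnd :: "nat \<Rightarrow> nat \<Rightarrow> bool \<Rightarrow> nat" where
  "Bnd n m side = 8 * (2 * HH n * (KK n - m) - (if side then HH n else 0))"

lemma Zs_eq: "Zs m u = (if u!(2*m) then {} else {2*m}) \<union> (if u!(2*m+1) then {} else {2*m+1})"
  by (auto simp: Zs_def)

lemma Zs_card_le: "card (Zs m u) \<le> 2"
  unfolding Zs_eq by (auto simp: card_insert_if)

lemma zf_correct:
  assumes "length u = n" "even n" "2*m+2 \<le> n" "\<forall>i<2*m. u!i"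
  shows "zf m (DLB n u) = card (Zs m u)"
proof (cases "u!(2*m)"; cases "u!(2*m+1)")
  assume a: "u!(2*m)" "u!(2*m+1)"
  then have "DLB n u \<ge> 2*m+2" using DLB_prefix(1)[OF assms] by blast
  then show ?thesis using a by (simp add: zf_def Zs_eq)
next
  assume a: "u!(2*m)" "\<not>u!(2*m+1)"
  then have "DLB n u = 2*m" using DLB_prefix(3)[OF assms] by simp
  then show ?thesis using a by (simp add: zf_def Zs_eq)
next
  assume a: "\<not>u!(2*m)" "u!(2*m+1)"
  then have "DLB n u = 2*m" using DLB_prefix(3)[OF assms] by simp
  then show ?thesis using a by (simp add: zf_def Zs_eq)
next
  assume a: "\<not>u!(2*m)" "\<not>u!(2*m+1)"
  then have "DLB n u = 2*m+1" using DLB_prefix(2)[OF assms] by simp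
  then show ?thesis using a by (simp add: zf_def Zs_eq)
qed

lemma pI_sym: "pairInv n m x y \<Longrightarrow> pairInv n m y x"
  by (auto simp: pairInv_def)

lemma pI_block: "pairInv n m x y \<Longrightarrow> 2*m+2 \<le> n \<Longrightarrow> y!(2*m) = (\<not>x!(2*m)) \<and> y!(2*m+1) = (\<not>x!(2*m+1))"
proof -
  assume a: "pairInv n m x y" "2*m+2 \<le> n"
  have "x!(2*m) \<noteq> y!(2*m)" "x!(2*m+1) \<noteq> y!(2*m+1)" using a unfolding pairInv_def by auto
  then show ?thesis by auto
qed

lemma bset_nth: "length x = n \<Longrightarrow> 2*m+2 \<le> n \<Longrightarrow> i < n \<Longrightarrow> bset m x ! i = (if i = 2*m \<or> i = 2*m+1 then True else x!i)"
  by (auto simp: bset_def nth_list_update)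

lemma bset_len: "length (bset m x) = length x" by (simp add: bset_def)

lemma pI_next_a:
  assumes "pairInv n m x y" "2*m+2 \<le> n" "y!(2*m)" "y!(2*m+1)"
  shows "pairInv n (m+1) (bset m x) y"
  using assms unfolding pairInv_def
  apply (simp add: bset_len)
  apply (intro conjI allI impI)
  subgoal for i by (cases "i < 2*m") (auto simp: bset_nth)
  subgoal for i by (cases "i < 2*m") (auto simp: bset_nth less_Suc_eq)
  subgoal for i by (auto simp: bset_nth)
  done

lemma pI_next_b:
  assumes "pairInv n m x y" "n = 2*m+2" "\<not>y!(2*m)" "\<not>y!(2*m+1)"
  shows "pairInv n (m+1) (bset m x) x"
proof -
  have xb: "x!(2*m)" "x!(2*m+1)" using pI_block[OF assms(1)] assms by auto
  show ?thesis using assms xb unfolding pairInv_def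
    apply (simp add: bset_len)
    apply (intro conjI allI impI)
    subgoal for i by (cases "i < 2*m") (auto simp: bset_nth less_Suc_eq)
    subgoal for i by (cases "i < 2*m") (auto simp: less_Suc_eq)
    subgoal for i by auto
    done
qed

lemma bset_id: "x!(2*m) \<Longrightarrow> x!(2*m+1) \<Longrightarrow> bset m x = x"
proof -
  assume a: "x!(2*m)" "x!(2*m+1)"
  have "x[2*m := True] = x" using list_update_id[of x "2*m"] a by simp
  moreover have "x[2*m+1 := True] = x" using list_update_id[of x "2*m+1"] a(2) by (metis (full_types))
  ultimately show ?thesis by (simp add: bset_def)
qed

lemma bset_y:
  assumes "pairInv n m x y" "n = 2*m+2" "\<not>x!(2*m)" "\<not>x!(2*m+1)"
  shows "y = bset m x"
proof (rule nth_equalityI)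
  show "length y = length (bset m x)" using assms(1) by (simp add: pairInv_def bset_len)
  fix i assume "i < length y"
  then have i: "i < n" using assms(1) by (simp add: pairInv_def)
  have xl: "length x = n" using assms(1) by (simp add: pairInv_def)
  show "y ! i = bset m x ! i"
  proof (cases "i < 2*m")
    case True then show ?thesis using assms(1) i xl assms(2) by (auto simp: pairInv_def bset_nth)
  next
    case False
    then have "i = 2*m \<or> i = 2*m+1" using i assms(2) by auto
    then show ?thesis using pI_block[OF assms(1)] assms xl by (auto simp: bset_nth)
  qed
qed

lemma dset_pair: "pairInv n m x y \<Longrightarrow> dset n x y = {2*m..<n}"
proof (rule set_eqI)
  fix i assume a: "pairInv n m x y"
  show "i \<in> dset n x y \<longleftrightarrow> i \<in> {2*m..<n}"
  proof (cases "i < 2*m")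
    case True then show ?thesis using a by (auto simp: pairInv_def dset_def)
  next
    case False then show ?thesis using a by (auto simp: pairInv_def dset_def)
  qed
qed

lemma pI_full: "pairInv n m x y \<Longrightarrow> n \<le> 2*m \<Longrightarrow> x = replicate n True"
  unfolding pairInv_def by (auto intro!: nth_equalityI)

lemma Zs_sub: "2*m+2 \<le> n \<Longrightarrow> Zs m u \<subseteq> {2*m..<n}"
  by (auto simp: Zs_def)

lemma Zs_card0: "card (Zs m u) = 0 \<Longrightarrow> u!(2*m) \<and> u!(2*m+1)"
  unfolding Zs_eq by (auto split: if_splits)

lemma Zs_card2: "card (Zs m u) = 2 \<Longrightarrow> \<not>u!(2*m) \<and> \<not>u!(2*m+1)"
  unfolding Zs_eq by (auto split: if_splits)

lemma H_bound: "1 \<le> z \<Longrightarrow> c \<le> n \<Longrightarrow> hv c z \<le> HH n"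
  unfolding HH_def using hv_anti[of z c] hv_mono[of c n 1] by linarith

lemma sp_inv:
  "\<lbrakk>\<forall>x\<in>set xs. length x = n; even n; 2*m \<le> n; ix < length xs; iy < length xs;
    pairInv n m (xs!ix) (xs!iy); fx = DLB n (xs!ix); fy = DLB n (xs!iy);
    side \<longrightarrow> (ixd < length xs \<and> xs!ixd = bset m (xs!ix) \<and> fxd = DLB n (xs!ixd))\<rbrakk>
   \<Longrightarrow> Inv n xs (sp n m side ix fx iy fy ixd fxd) \<and> Psi n (sp n m side ix fx iy fy ixd fxd) \<le> Bnd n m side"
proof (induction n m side ix fx iy fy ixd fxd rule: sp.induct)
  case (1 n m side ix fx iy fy ixd fxd)
  let ?x = "xs!ix"
  let ?y = "xs!iy"
  show ?case
  proof (cases "n \<le> 2*m")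
    case True
    then have "sp n m side ix fx iy fy ixd fxd = Done" by (subst sp.simps) simp
    moreover have "?x = replicate n True" using pI_full "1.prems"(6) True by blast
    moreover have "?x \<in> set xs" using "1.prems"(4) by simp
    ultimately show ?thesis using "1.prems"(1) by (simp add: Inv_def Psi_def)
  next
    case False
    then have nm: "2*m+2 \<le> n" using "1.prems"(2) by presburger
    have lx: "length ?x = n" "length ?y = n" and prex: "\<forall>i<2*m. ?x!i" "\<forall>i<2*m. ?y!i"
      using "1.prems"(6) by (auto simp: pairInv_def)
    have zx: "zf m fx = card (Zs m ?x)" using zf_correct[OF lx(1) "1.prems"(2) nm prex(1)] "1.prems"(7) by simp
    have zy: "zf m fy = card (Zs m ?y)" using zf_correct[OF lx(2) "1.prems"(2) nm prex(2)] "1.prems"(8) by simp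
    have blk: "?y!(2*m) = (\<not>?x!(2*m)) \<and> ?y!(2*m+1) = (\<not>?x!(2*m+1))" using pI_block[OF "1.prems"(6) nm] .
    have km: "KK n - m \<ge> 1" using nm by (simp add: KK_def)
    have zle: "zf m fx \<le> 2" "zf m fy \<le> 2" using zx zy Zs_card_le by auto
    consider (sT) "side" "zf m fy = 0 \<or> n - 2*m = zf m fy"
      | (sF) "\<not>side" "zf m fx = 0 \<or> n - 2*m = zf m fx"
      | (srch) "\<not>(zf m (if side then fy else fx) = 0 \<or> n - 2*m = zf m (if side then fy else fx))"
      by (cases side; cases "zf m (if side then fy else fx) = 0 \<or> n - 2*m = zf m (if side then fy else fx)") auto
    then show ?thesis
    proof cases
      case sT
      let ?ir = "if zf m fy = 0 then iy else ix"
      let ?fr = "if zf m fy = 0 then fy else fx"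
      have eq: "sp n m side ix fx iy fy ixd fxd = sp n (m+1) False ixd fxd ?ir ?fr 0 0"
        using False sT by (subst sp.simps) simp
      have xd: "ixd < length xs" "xs!ixd = bset m ?x" "fxd = DLB n (xs!ixd)" using "1.prems"(9) sT(1) by auto
      have pI: "pairInv n (m+1) (xs!ixd) (xs!?ir)"
      proof (cases "zf m fy = 0")
        case True
        then have "?y!(2*m)" "?y!(2*m+1)" using zy Zs_card0 by auto
        then show ?thesis using pI_next_a[OF "1.prems"(6) nm] xd True by simp
      next
        case F: False
        then have n2: "n = 2*m+2" "zf m fy = 2" using sT(2) zle nm by auto
        then have "\<not>?y!(2*m)" "\<not>?y!(2*m+1)" using zy Zs_card2 by auto
        then show ?thesis using pI_next_b[OF "1.prems"(6) n2(1)] xd F by simp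
      qed
      have fr: "?fr = DLB n (xs!?ir)" using "1.prems"(7,8) by simp
      have R: "Inv n xs (sp n (m+1) False ixd fxd ?ir ?fr 0 0) \<and> Psi n (sp n (m+1) False ixd fxd ?ir ?fr 0 0) \<le> Bnd n (m+1) False"
        by (rule "1.IH"(1)) (use False sT "1.prems" xd pI fr nm in auto)
      have "Bnd n (m+1) False \<le> Bnd n m True"
      proof -
        have "2 * HH n * (KK n - (m+1)) + HH n \<le> 2 * HH n * (KK n - m)"
        proof -
          have "KK n - m = Suc (KK n - (m+1))" using km by simp
          then show ?thesis by simp
        qed
        then show ?thesis unfolding Bnd_def by simp
      qed
      then show ?thesis using R eq sT(1) by simp
    next
      case sF
      let ?ir = "if zf m fx = 0 then ix else iy"
      let ?fr = "if zf m fx = 0 then fx else fy"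
      have eq: "sp n m side ix fx iy fy ixd fxd = sp n m True ix fx iy fy ?ir ?fr"
        using False sF by (subst sp.simps) simp
      have bs: "xs!?ir = bset m ?x"
      proof (cases "zf m fx = 0")
        case True
        then have "?x!(2*m)" "?x!(2*m+1)" using zx Zs_card0 by auto
        then show ?thesis using bset_id True by simp
      next
        case F: False
        then have n2: "n = 2*m+2" "zf m fx = 2" using sF(2) zle nm by auto
        then have "\<not>?x!(2*m)" "\<not>?x!(2*m+1)" using zx Zs_card2 by auto
        then show ?thesis using bset_y[OF "1.prems"(6) n2(1)] F by simp
      qed
      have fr: "?fr = DLB n (xs!?ir)" using "1.prems"(7,8) by simp
      have R: "Inv n xs (sp n m True ix fx iy fy ?ir ?fr) \<and> Psi n (sp n m True ix fx iy fy ?ir ?fr) \<le> Bnd n m True"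
        by (rule "1.IH"(2)) (use False sF "1.prems" bs fr in auto)
      have "Bnd n m True \<le> Bnd n m False" unfolding Bnd_def by simp
      then show ?thesis using R eq sF(1) by simp
    next
      case srch
      let ?u = "if side then ?y else ?x"
      let ?v = "if side then ?x else ?y"
      let ?z = "zf m (if side then fy else fx)"
      have eq: "sp n m side ix fx iy fy ixd fxd = Srch m side ix fx iy fy ixd fxd (if side then ix else iy) (n-2*m) ?z"
        using False srch by (subst sp.simps) simp
      have pIuv: "pairInv n m ?u ?v" using "1.prems"(6) pI_sym by auto
      have D: "dset n ?u ?v = {2*m..<n}" using dset_pair[OF pIuv] .
      have zu: "?z = card (Zs m ?u)" using zx zy by simp
      have zpos: "0 < ?z" "?z < n - 2*m" using srch zle nm by auto
      have sI: "searchInv n m ?u (xs!(if side then ix else iy)) (n-2*m) ?z"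
        unfolding searchInv_def using D zu zpos Zs_sub[OF nm] by (auto split: if_splits)
      have inv: "Inv n xs (Srch m side ix fx iy fy ixd fxd (if side then ix else iy) (n-2*m) ?z)"
        unfolding Inv_def SInv_def using "1.prems" nm sI by auto
      have hb: "hv (n-2*m) ?z \<le> HH n" using H_bound[of ?z "n-2*m" n] zpos by auto
      have "Psi n (Srch m side ix fx iy fy ixd fxd (if side then ix else iy) (n-2*m) ?z) \<le> Bnd n m side"
      proof -
        have k: "KK n - m = Suc (KK n - m - 1)" using km by simp
        show ?thesis unfolding Psi_def Bnd_def using hb k
          by (cases side) (simp_all add: algebra_simps)
      qed
      then show ?thesis using inv eq by simp
    qed
  qed
qed

lemma count_fix:
  assumes fin: "finite C" and ZK: "Z \<subseteq> K" and KC: "K \<subseteq> C" and zs: "card Z \<le> s"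
  shows "card {S. S \<subseteq> C \<and> card S = s \<and> S \<inter> K = Z} = (card C - card K) choose (s - card Z)"
proof -
  have finK: "finite K" using KC fin by (rule finite_subset)
  have finZ: "finite Z" using ZK finK by (rule finite_subset)
  have bij: "bij_betw (\<lambda>T. T \<union> Z) {T. T \<subseteq> C - K \<and> card T = s - card Z} {S. S \<subseteq> C \<and> card S = s \<and> S \<inter> K = Z}"
  proof (rule bij_betw_byWitness[where f'="\<lambda>S. S - Z"])
    show "\<forall>T\<in>{T. T \<subseteq> C - K \<and> card T = s - card Z}. T \<union> Z - Z = T" using ZK by blast
    show "\<forall>S\<in>{S. S \<subseteq> C \<and> card S = s \<and> S \<inter> K = Z}. S - Z \<union> Z = S" by blast
    show "(\<lambda>T. T \<union> Z) ` {T. T \<subseteq> C - K \<and> card T = s - card Z} \<subseteq> {S. S \<subseteq> C \<and> card S = s \<and> S \<inter> K = Z}"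
    proof
      fix S assume "S \<in> (\<lambda>T. T \<union> Z) ` {T. T \<subseteq> C - K \<and> card T = s - card Z}"
      then obtain T where T: "T \<subseteq> C - K" "card T = s - card Z" "S = T \<union> Z" by auto
      have finT: "finite T" using T(1) fin by (meson Diff_subset finite_subset)
      have dj: "T \<inter> Z = {}" using T(1) ZK by auto
      have "card S = card T + card Z" using T(3) card_Un_disjoint[OF finT finZ dj] by simp
      moreover have "S \<subseteq> C" using T(1,3) ZK KC by blast
      moreover have "S \<inter> K = Z" using T(1,3) ZK by blast
      ultimately show "S \<in> {S. S \<subseteq> C \<and> card S = s \<and> S \<inter> K = Z}" using T(2) zs by simp
    qed
    show "(\<lambda>S. S - Z) ` {S. S \<subseteq> C \<and> card S = s \<and> S \<inter> K = Z} \<subseteq> {T. T \<subseteq> C - K \<and> card T = s - card Z}"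
    proof
      fix T assume "T \<in> (\<lambda>S. S - Z) ` {S. S \<subseteq> C \<and> card S = s \<and> S \<inter> K = Z}"
      then obtain S where S: "S \<subseteq> C" "card S = s" "S \<inter> K = Z" "T = S - Z" by auto
      have finS: "finite S" using S(1) fin by (rule finite_subset)
      have "Z \<subseteq> S" using S(3) by blast
      then have "card T = s - card Z" using S(2,4) card_Diff_subset[OF finZ] by simp
      moreover have "T \<subseteq> C - K" using S(1,3,4) by blast
      ultimately show "T \<in> {T. T \<subseteq> C - K \<and> card T = s - card Z}" by simp
    qed
  qed
  have "card {T. T \<subseteq> C - K \<and> card T = s - card Z} = card (C - K) choose (s - card Z)"
    using n_subsets[of "C - K" "s - card Z"] fin by simp
  moreover have "card (C - K) = card C - card K" using card_Diff_subset[OF finK KC] .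
  ultimately show ?thesis using bij_betw_same_card[OF bij] by simp
qed

lemma binom_11:
  assumes "1 \<le> s" "1 \<le> c" "c \<le> 2* s"
  shows "c choose s \<le> 8 * ((c - 1) choose (s - 1))"
proof -
  have e: "s * (c choose s) = c * ((c-1) choose (s-1))" using times_binomial_minus1_eq[of s c] assms by simp
  have "c * (c choose s) \<le> 2 * s * (c choose s)" using assms by simp
  also have "\<dots> = c * (2 * ((c-1) choose (s-1)))" using e by simp
  finally have "c choose s \<le> 2 * ((c-1) choose (s-1))" using assms by simp
  then show ?thesis by simp
qed

lemma binom_22:
  assumes "2 \<le> s" "3 \<le> c" "c \<le> 2* s" "2* s \<le> c+1"
  shows "c choose s \<le> 8 * ((c - 2) choose (s - 2))"
proof -
  have e1: "s * (c choose s) = c * ((c-1) choose (s-1))" using times_binomial_minus1_eq[of s c] assms by simp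
  have e2: "(s-1) * ((c-1) choose (s-1)) = (c-1) * ((c-1-1) choose (s-1-1))"
    using times_binomial_minus1_eq[of "s-1" "c-1"] assms by simp
  have e: "s * (s-1) * (c choose s) = c * (c-1) * ((c-2) choose (s-2))"
  proof -
    have "s * (s-1) * (c choose s) = (s-1) * (s * (c choose s))" by simp
    also have "\<dots> = c * ((s-1) * ((c-1) choose (s-1)))" using e1 by simp
    also have "\<dots> = c * ((c-1) * ((c-1-1) choose (s-1-1)))" using e2 by simp
    also have "\<dots> = c * (c-1) * ((c-2) choose (s-2))"
    proof -
      have cc: "c-1-1 = c-2" "s-1-1 = s-2" by arith+
      show ?thesis by (simp only: cc mult.assoc)
    qed
    finally show ?thesis .
  qed
  have a1: "c * (c-2) \<le> (2* s) * (2*(s-1))" using assms by (intro mult_le_mono) auto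
  have a2: "c * (c-1) \<le> 2 * (c * (c-2))"
  proof -
    have "c - 1 \<le> 2 * (c-2)" using assms by simp
    then have "c * (c-1) \<le> c * (2*(c-2))" by simp
    then show ?thesis by simp
  qed
  have a1': "c * (c-2) \<le> 4 * (s * (s-1))" using a1 by (simp add: algebra_simps)
  have a: "c * (c-1) \<le> 8 * (s * (s-1))" using a1' a2 by linarith
  have "c * (c-1) * (c choose s) \<le> 8 * (s * (s-1)) * (c choose s)" using a by simp
  also have "\<dots> = c * (c-1) * (8 * ((c-2) choose (s-2)))" using e by simp
  finally show ?thesis using assms by simp
qed

lemma binom_21:
  assumes "1 \<le> s" "2 \<le> c" "c \<le> 2* s" "2* s \<le> c+1"
  shows "c choose s \<le> 8 * ((c - 2) choose (s - 1))"
proof -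
  have e1: "s * (c choose s) = c * ((c-1) choose (s-1))" using times_binomial_minus1_eq[of s c] assms by simp
  have e2: "((c-1) - (s-1)) * ((c-1) choose (s-1)) = (c-1) * ((c-1-1) choose (s-1))"
    using binomial_absorb_comp[of "c-1" "s-1"] by simp
  have e: "s * (c-s) * (c choose s) = c * (c-1) * ((c-2) choose (s-1))"
  proof -
    have "s * (c-s) * (c choose s) = (c-s) * (s * (c choose s))" by simp
    also have "\<dots> = c * (((c-1) - (s-1)) * ((c-1) choose (s-1)))" using e1 assms by simp
    also have "\<dots> = c * ((c-1) * ((c-1-1) choose (s-1)))" using e2 by simp
    also have "\<dots> = c * (c-1) * ((c-2) choose (s-1))"
    proof -
      have cc: "c-1-1 = c-2" by arith
      show ?thesis by (simp only: cc mult.assoc)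
    qed
    finally show ?thesis .
  qed
  have a1: "c * (c-1) \<le> (2* s) * (2*(c-s))" using assms by (intro mult_le_mono) auto
  have a1': "c * (c-1) \<le> 4 * (s * (c-s))" using a1 by (simp add: algebra_simps)
  have a: "c * (c-1) \<le> 8 * (s * (c-s))" using a1' by linarith
  have "c * (c-1) * (c choose s) \<le> 8 * (s * (c-s)) * (c choose s)" using a by simp
  also have "\<dots> = c * (c-1) * (8 * ((c-2) choose (s-1)))" using e by simp
  finally show ?thesis using assms by simp
qed

lemma binom_bound:
  assumes "(kk = 1 \<and> z = 1) \<or> (kk = 2 \<and> z = 1) \<or> (kk = 2 \<and> z = 2)" "z < c" "kk \<le> c" "s = (c+1) div 2"
  shows "c choose s \<le> 8 * ((c - kk) choose (s - z))"
proof -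
  have s: "c \<le> 2* s" "2* s \<le> c+1" using assms(4) by auto
  consider "kk = 1 \<and> z = 1" | "kk = 2 \<and> z = 1" | "kk = 2 \<and> z = 2" using assms(1) by blast
  then show ?thesis
  proof cases
    case 1 then show ?thesis using binom_11[of s c] s assms by auto
  next
    case 2 then show ?thesis using binom_21[of s c] s assms by auto
  next
    case 3 then show ?thesis using binom_22[of s c] s assms by auto
  qed
qed

definition flipS :: "nat \<Rightarrow> bool list \<Rightarrow> nat set \<Rightarrow> bool list" where
  "flipS n u D = map (\<lambda>i. if i \<in> D then \<not> u!i else u!i) [0..<n]"

lemma dset_sub: "dset n u v \<subseteq> {..<n}" by (auto simp: dset_def)
lemma dset_fin: "finite (dset n u v)" by (rule finite_subset[OF dset_sub]) simp
lemma dset_sym: "dset n u v = dset n v u" by (auto simp: dset_def)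

lemma dset_flipS: "length u = n \<Longrightarrow> D \<subseteq> {..<n} \<Longrightarrow> dset n (flipS n u D) u = D"
  by (auto simp: dset_def flipS_def)

lemma flipS_dset: "length y = n \<Longrightarrow> length u = n \<Longrightarrow> flipS n u (dset n y u) = y"
  by (auto simp: dset_def flipS_def intro!: nth_equalityI)

lemma flipS_len: "length (flipS n u D) = n" by (simp add: flipS_def)

lemma Outs_char: "Outs n s 0 u w = {y \<in> bitstrings n. dset n y u \<subseteq> dset n u w \<and> card (dset n y u) = s}"
proof -
  have "\<And>y. card (dset n y u - dset n u w) = 0 \<longleftrightarrow> dset n y u \<subseteq> dset n u w"
  proof -
    fix y
    have "finite (dset n y u - dset n u w)" using dset_fin by blast
    then show "card (dset n y u - dset n u w) = 0 \<longleftrightarrow> dset n y u \<subseteq> dset n u w" by auto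
  qed
  moreover have "\<And>y. dset n y u \<subseteq> dset n u w \<Longrightarrow> dset n y u \<inter> dset n u w = dset n y u" by blast
  ultimately show ?thesis unfolding Outs_def by auto
qed

lemma Outs_card_P:
  assumes "length u = n"
  shows "card {y \<in> Outs n s 0 u w. P (dset n y u)} = card {D. D \<subseteq> dset n u w \<and> card D = s \<and> P D}"
proof -
  have "bij_betw (\<lambda>y. dset n y u) {y \<in> Outs n s 0 u w. P (dset n y u)} {D. D \<subseteq> dset n u w \<and> card D = s \<and> P D}"
  proof (rule bij_betw_byWitness[where f'="flipS n u"])
    show "\<forall>y\<in>{y \<in> Outs n s 0 u w. P (dset n y u)}. flipS n u (dset n y u) = y"
    proof
      fix y assume "y \<in> {y \<in> Outs n s 0 u w. P (dset n y u)}"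
      then have "length y = n" by (simp add: Outs_def bitstrings_def)
      then show "flipS n u (dset n y u) = y" using flipS_dset assms by simp
    qed
    show "\<forall>D\<in>{D. D \<subseteq> dset n u w \<and> card D = s \<and> P D}. dset n (flipS n u D) u = D"
    proof
      fix D assume "D \<in> {D. D \<subseteq> dset n u w \<and> card D = s \<and> P D}"
      then have "D \<subseteq> dset n u w" by simp
      then have "D \<subseteq> {..<n}" using dset_sub by (rule subset_trans)
      then show "dset n (flipS n u D) u = D" using dset_flipS[OF assms] by simp
    qed
    show "(\<lambda>y. dset n y u) ` {y \<in> Outs n s 0 u w. P (dset n y u)} \<subseteq> {D. D \<subseteq> dset n u w \<and> card D = s \<and> P D}"
    proof
      fix D assume "D \<in> (\<lambda>y. dset n y u) ` {y \<in> Outs n s 0 u w. P (dset n y u)}"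
      then obtain y where "y \<in> Outs n s 0 u w" "P (dset n y u)" "D = dset n y u" by blast
      then show "D \<in> {D. D \<subseteq> dset n u w \<and> card D = s \<and> P D}" unfolding Outs_char by simp
    qed
    show "flipS n u ` {D. D \<subseteq> dset n u w \<and> card D = s \<and> P D} \<subseteq> {y \<in> Outs n s 0 u w. P (dset n y u)}"
    proof
      fix y assume "y \<in> flipS n u ` {D. D \<subseteq> dset n u w \<and> card D = s \<and> P D}"
      then obtain D where D: "D \<subseteq> dset n u w" "card D = s" "P D" "y = flipS n u D" by auto
      have Dn: "D \<subseteq> {..<n}" using D(1) dset_sub by blast
      have e: "dset n y u = D" using D(4) dset_flipS[OF assms Dn] by simp
      show "y \<in> {y \<in> Outs n s 0 u w. P (dset n y u)}"
        unfolding Outs_char using e D flipS_len[of n u D] by (simp add: bitstrings_def)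
    qed
  qed
  then show ?thesis by (rule bij_betw_same_card)
qed

lemma succ_char:
  assumes lu: "length u = n" and ly: "length y = n" and ev: "even n" and nm: "2*m+2 \<le> n"
    and pre: "\<forall>i<2*m. u!i" and D: "dset n y u \<subseteq> {2*m..<n}"
  shows "2*m+2 \<le> DLB n y \<longleftrightarrow> dset n y u \<inter> {2*m, 2*m+1} = Zs m u"
proof -
  have yi: "\<And>i. i < n \<Longrightarrow> y!i = (if i \<in> dset n y u then \<not> u!i else u!i)"
    by (auto simp: dset_def)
  have prey: "\<forall>i<2*m. y!i"
  proof (intro allI impI)
    fix i assume i: "i < 2*m"
    then have "i \<notin> dset n y u" using D by auto
    then show "y!i" using yi[of i] i nm pre by auto
  qed
  have y0: "y!(2*m) = (if 2*m \<in> dset n y u then \<not> u!(2*m) else u!(2*m))" using yi nm by simp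
  have y1: "y!(2*m+1) = (if 2*m+1 \<in> dset n y u then \<not> u!(2*m+1) else u!(2*m+1))" using yi nm by simp
  have Rg: "\<And>D a b. a \<noteq> b \<Longrightarrow> (D \<inter> {a, b} = {i. (i = a \<or> i = b) \<and> \<not> u!i}) \<longleftrightarrow> ((a \<in> D) = (\<not> u!a) \<and> (b \<in> D) = (\<not> u!b))"
  proof -
    fix D :: "nat set" and a b :: nat assume ab: "a \<noteq> b"
    show "(D \<inter> {a, b} = {i. (i = a \<or> i = b) \<and> \<not> u!i}) \<longleftrightarrow> ((a \<in> D) = (\<not> u!a) \<and> (b \<in> D) = (\<not> u!b))"
    proof
      assume h: "D \<inter> {a, b} = {i. (i = a \<or> i = b) \<and> \<not> u!i}"
      have "a \<in> D \<inter> {a, b} \<longleftrightarrow> a \<in> {i. (i = a \<or> i = b) \<and> \<not> u!i}" using h by simp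
      moreover have "b \<in> D \<inter> {a, b} \<longleftrightarrow> b \<in> {i. (i = a \<or> i = b) \<and> \<not> u!i}" using h by simp
      ultimately show "(a \<in> D) = (\<not> u!a) \<and> (b \<in> D) = (\<not> u!b)" by simp
    next
      assume h: "(a \<in> D) = (\<not> u!a) \<and> (b \<in> D) = (\<not> u!b)"
      show "D \<inter> {a, b} = {i. (i = a \<or> i = b) \<and> \<not> u!i}"
      proof (rule set_eqI)
        fix i show "i \<in> D \<inter> {a, b} \<longleftrightarrow> i \<in> {i. (i = a \<or> i = b) \<and> \<not> u!i}"
          using h by (cases "i = a"; cases "i = b") simp_all
      qed
    qed
  qed
  have R1: "dset n y u \<inter> {2*m, 2*m+1} = Zs m u \<longleftrightarrow> ((2*m \<in> dset n y u) = (\<not> u!(2*m)) \<and> (2*m+1 \<in> dset n y u) = (\<not> u!(2*m+1)))"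
    unfolding Zs_def by (rule Rg) simp
  have R2: "y!(2*m) = ((2*m \<in> dset n y u) = (\<not> u!(2*m)))" using y0 by (cases "2*m \<in> dset n y u") simp_all
  have R3: "y!(2*m+1) = ((2*m+1 \<in> dset n y u) = (\<not> u!(2*m+1)))" using y1 by (cases "2*m+1 \<in> dset n y u") simp_all
  have R: "dset n y u \<inter> {2*m, 2*m+1} = Zs m u \<longleftrightarrow> y!(2*m) \<and> y!(2*m+1)"
    using R1 R2 R3 by simp
  have L: "2*m+2 \<le> DLB n y \<longleftrightarrow> y!(2*m) \<and> y!(2*m+1)"
  proof (cases "y!(2*m) \<and> y!(2*m+1)")
    case True then show ?thesis using DLB_prefix(1)[OF ly ev nm prey] by simp
  next
    case False
    then consider "\<not>y!(2*m) \<and> \<not>y!(2*m+1)" | "y!(2*m) \<noteq> y!(2*m+1)" by auto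
    then show ?thesis
    proof cases
      case 1 then show ?thesis using DLB_prefix(2)[OF ly ev nm prey] by simp
    next
      case 2
      then have "DLB n y = 2*m" using DLB_prefix(3)[OF ly ev nm prey] by simp
      then show ?thesis using 2 by simp
    qed
  qed
  show ?thesis using L R by simp
qed

lemma flipS_Zs:
  assumes "length u = n" "2*m+2 \<le> n"
  shows "flipS n u (Zs m u) = bset m u"
proof (rule nth_equalityI)
  show "length (flipS n u (Zs m u)) = length (bset m u)" using assms(1) by (simp add: flipS_len bset_len)
  fix i assume "i < length (flipS n u (Zs m u))"
  then have i: "i < n" by (simp add: flipS_len)
  show "flipS n u (Zs m u) ! i = bset m u ! i"
    using i assms by (simp add: flipS_def bset_nth[OF assms(1,2) i] Zs_def)
qed

lemma pI_next_c:
  assumes "pairInv n m x y" "2*m+2 \<le> n"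
  shows "pairInv n (m+1) (bset m x) (bset m y)"
  using assms unfolding pairInv_def
  apply (simp add: bset_len)
  apply (intro conjI allI impI)
  subgoal for i by (cases "i < 2*m") (auto simp: bset_nth less_Suc_eq)
  subgoal for i by (cases "i < 2*m") (auto simp: bset_nth less_Suc_eq)
  subgoal for i by (auto simp: bset_nth)
  done

lemma SInv_append:
  "SInv n xs m side ix fx iy fy ixd fxd ic c z \<Longrightarrow> SInv n (xs@[y]) m side ix fx iy fy ixd fxd ic c z"
  unfolding SInv_def by (auto simp: nth_append)

lemma unpack:
  assumes "Inv n xs (Srch m side ix fx iy fy ixd fxd ic c z)"
  shows "\<forall>x\<in>set xs. length x = n" "SInv n xs m side ix fx iy fy ixd fxd ic c z"
  using assms by (auto simp: Inv_def)

lemma srch_basic: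
  assumes inv: "Inv n xs (Srch m side ix fx iy fy ixd fxd ic c z)"
  defines "u \<equiv> (if side then xs!iy else xs!ix)"
  shows "length u = n" "\<forall>i<2*m. u!i" "2*m+2 \<le> n"
    "dset n u (xs!ic) \<subseteq> {2*m..<n}" "card (dset n u (xs!ic)) = c" "Zs m u \<subseteq> dset n u (xs!ic)"
    "dset n u (xs!ic) = {2*m..<n} \<or> dset n u (xs!ic) \<inter> Ws m u = {}" "z = card (Zs m u)" "0 < z" "z < c"
proof -
  have SI: "SInv n xs m side ix fx iy fy ixd fxd ic c z" using unpack[OF inv] by simp
  then have pI: "pairInv n m (xs!ix) (xs!iy)" by (simp add: SInv_def)
  then show "length u = n" "\<forall>i<2*m. u!i" unfolding u_def pairInv_def by auto
  show "2*m+2 \<le> n" using SI by (simp add: SInv_def)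
  have "searchInv n m u (xs!ic) c z" using SI unfolding SInv_def u_def by simp
  then show "dset n u (xs!ic) \<subseteq> {2*m..<n}" "card (dset n u (xs!ic)) = c" "Zs m u \<subseteq> dset n u (xs!ic)"
    "dset n u (xs!ic) = {2*m..<n} \<or> dset n u (xs!ic) \<inter> Ws m u = {}" "z = card (Zs m u)" "0 < z" "z < c"
    unfolding searchInv_def by auto
qed

lemma srch_count:
  assumes ev: "even n" and inv: "Inv n xs (Srch m side ix fx iy fy ixd fxd ic c z)"
  defines "u \<equiv> (if side then xs!iy else xs!ix)" and "w \<equiv> xs!ic" and "s \<equiv> (c+1) div 2"
  shows "Outs n s 0 u w \<noteq> {}" "card (Outs n s 0 u w) \<le> 8 * card {y \<in> Outs n s 0 u w. 2*m+2 \<le> DLB n y}"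
proof -
  note B = srch_basic[OF inv, folded u_def w_def]
  define C where "C = dset n u w"
  have finC: "finite C" unfolding C_def by (rule dset_fin)
  have cC: "card C = c" using B(5) unfolding C_def .
  have z2: "z \<le> 2" using B(8) Zs_card_le by simp
  have sc: "s \<le> c" "1 \<le> s" using B(9,10) unfolding s_def by auto
  have zs: "z \<le> s" using B(9,10) z2 unfolding s_def by auto
  have cardO: "card (Outs n s 0 u w) = c choose s"
  proof -
    have "card {y \<in> Outs n s 0 u w. True} = card {D. D \<subseteq> dset n u w \<and> card D = s \<and> True}"
      by (rule Outs_card_P[OF B(1)])
    then show ?thesis using n_subsets[OF finC, of s] cC unfolding C_def by simp
  qed
  have pos: "0 < c choose s" using sc by simp
  show ne: "Outs n s 0 u w \<noteq> {}" using cardO pos by (metis card.empty less_irrefl)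
  let ?K = "C \<inter> {2*m, 2*m+1}"
  have succ_eq: "{y \<in> Outs n s 0 u w. 2*m+2 \<le> DLB n y} = {y \<in> Outs n s 0 u w. dset n y u \<inter> {2*m, 2*m+1} = Zs m u}"
  proof (rule Collect_cong)
    fix y
    show "(y \<in> Outs n s 0 u w \<and> 2*m+2 \<le> DLB n y) = (y \<in> Outs n s 0 u w \<and> dset n y u \<inter> {2*m, 2*m+1} = Zs m u)"
    proof (cases "y \<in> Outs n s 0 u w")
      case True
      then have ly: "length y = n" and Dy: "dset n y u \<subseteq> dset n u w" by (auto simp: Outs_char bitstrings_def)
      have "dset n y u \<subseteq> {2*m..<n}" using Dy B(4) by (rule subset_trans)
      then show ?thesis using succ_char[OF B(1) ly ev B(3) B(2)] True by simp
    qed simp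
  qed
  have c1: "card {y \<in> Outs n s 0 u w. dset n y u \<inter> {2*m, 2*m+1} = Zs m u}
      = card {D. D \<subseteq> C \<and> card D = s \<and> D \<inter> {2*m, 2*m+1} = Zs m u}"
    using Outs_card_P[OF B(1), of s w "\<lambda>D. D \<inter> {2*m, 2*m+1} = Zs m u"] unfolding C_def by simp
  have c2: "{D. D \<subseteq> C \<and> card D = s \<and> D \<inter> {2*m, 2*m+1} = Zs m u} = {D. D \<subseteq> C \<and> card D = s \<and> D \<inter> ?K = Zs m u}"
    by blast
  have ZK: "Zs m u \<subseteq> ?K" using B(6) unfolding C_def by (auto simp: Zs_def)
  have KC: "?K \<subseteq> C" by blast
  have c3: "card {D. D \<subseteq> C \<and> card D = s \<and> D \<inter> ?K = Zs m u} = (card C - card ?K) choose (s - card (Zs m u))"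
    by (rule count_fix[OF finC ZK KC]) (use zs B(8) in simp)
  have kk: "(card ?K = 1 \<and> z = 1) \<or> (card ?K = 2 \<and> z = 1) \<or> (card ?K = 2 \<and> z = 2)"
  proof (cases "C = {2*m..<n}")
    case True
    then have "?K = {2*m, 2*m+1}" using B(3) by auto
    then have "card ?K = 2" by simp
    then show ?thesis using B(9) z2 by auto
  next
    case False
    then have "C \<inter> Ws m u = {}" using B(7) unfolding C_def by simp
    then have "?K = Zs m u" using ZK by (auto simp: Ws_def Zs_def)
    then show ?thesis using B(8,9) z2 by auto
  qed
  have kc: "card ?K \<le> c" using card_mono[OF finC KC] cC by simp
  have "c choose s \<le> 8 * ((c - card ?K) choose (s - z))"
    by (rule binom_bound[OF kk B(10) kc]) (simp add: s_def)
  then show "card (Outs n s 0 u w) \<le> 8 * card {y \<in> Outs n s 0 u w. 2*m+2 \<le> DLB n y}"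
    using cardO succ_eq c1 c2 c3 cC B(8) by simp
qed

lemma srch_next:
  assumes ev: "even n" and inv: "Inv n xs (Srch m side ix fx iy fy ixd fxd ic c z)"
    and y: "y \<in> Outs n ((c+1) div 2) 0 (if side then xs!iy else xs!ix) (xs!ic)"
  shows "Inv n (xs@[y]) (step n (Srch m side ix fx iy fy ixd fxd ic c z) (length xs) (DLB n y)) \<and>
         Psi n (step n (Srch m side ix fx iy fy ixd fxd ic c z) (length xs) (DLB n y)) + (if 2*m+2 \<le> DLB n y then 8 else 0)
           \<le> Psi n (Srch m side ix fx iy fy ixd fxd ic c z)"
proof -
  define u where "u = (if side then xs!iy else xs!ix)"
  define w where "w = xs!ic"
  define s where "s = (c+1) div 2"
  define \<sigma> where "\<sigma> = Srch m side ix fx iy fy ixd fxd ic c z"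
  define t where "t = length xs"
  note B = srch_basic[OF inv, folded u_def]
  have lens: "\<forall>x\<in>set xs. length x = n" and SI: "SInv n xs m side ix fx iy fy ixd fxd ic c z"
    using unpack[OF inv] by auto
  have SI': "2*m+2 \<le> n" "ix < length xs" "iy < length xs" "ic < length xs" "pairInv n m (xs!ix) (xs!iy)"
    "fx = DLB n (xs!ix)" "fy = DLB n (xs!iy)" "side \<longrightarrow> ixd < length xs \<and> xs!ixd = bset m (xs!ix) \<and> fxd = DLB n (xs!ixd)"
    using SI unfolding SInv_def by auto
  have yO: "y \<in> Outs n s 0 u w" using y unfolding s_def u_def w_def .
  then have ly: "length y = n" and Dy: "dset n y u \<subseteq> dset n u w" and cDy: "card (dset n y u) = s"
    by (auto simp: Outs_char bitstrings_def)
  have DyU: "dset n y u \<subseteq> {2*m..<n}" using Dy B(4) unfolding w_def by (rule subset_trans)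
  have lens': "\<forall>x\<in>set (xs@[y]). length x = n" using lens ly by simp
  have nth_old: "\<And>i. i < length xs \<Longrightarrow> (xs@[y])!i = xs!i" by (simp add: nth_append)
  have nth_new: "(xs@[y])!t = y" unfolding t_def by simp
  have km: "KK n - m = Suc (KK n - m - 1)" using B(3) by (simp add: KK_def)
  have hvs: "hv c z = Suc (hv s z)" unfolding s_def using B(9,10) by (intro hv_step) auto
  have PsiS: "Psi n \<sigma> = 8 * (hv c z + (if side then 0 else HH n) + 2 * HH n * (KK n - m - 1))"
    unfolding \<sigma>_def Psi_def by simp
  show ?thesis
  proof (cases "2*m+2 \<le> DLB n y")
    case False
    then have st: "step n \<sigma> t (DLB n y) = \<sigma>" unfolding step_def \<sigma>_def by simp
    have "Inv n (xs@[y]) \<sigma>" unfolding \<sigma>_def Inv_def using lens' SInv_append[OF SI] by simp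
    then show ?thesis using st False unfolding \<sigma>_def t_def by simp
  next
    case True
    have DB: "dset n y u \<inter> {2*m, 2*m+1} = Zs m u"
      using True succ_char[OF B(1) ly ev B(3) B(2) DyU] by simp
    have ZD: "Zs m u \<subseteq> dset n y u" using DB by blast
    show ?thesis
    proof (cases "s = z")
      case sz: True
      have DZ: "dset n y u = Zs m u"
        using card_subset_eq[OF dset_fin ZD] cDy sz B(8) by simp
      have yb: "y = bset m u"
        using flipS_dset[OF ly B(1)] DZ flipS_Zs[OF B(1) B(3)] by simp
      have hv1: "hv c z = 1" using hvs sz hv_zero by simp
      show ?thesis
      proof (cases side)
        case False
        have st: "step n \<sigma> t (DLB n y) = sp n m True ix fx iy fy t (DLB n y)"
          unfolding step_def \<sigma>_def using True sz False by (simp add: s_def)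
        have R: "Inv n (xs@[y]) (sp n m True ix fx iy fy t (DLB n y)) \<and> Psi n (sp n m True ix fx iy fy t (DLB n y)) \<le> Bnd n m True"
        proof (rule sp_inv)
          show "\<forall>x\<in>set (xs@[y]). length x = n" by (rule lens')
          show "even n" by (rule ev)
          show "2*m \<le> n" using B(3) by simp
          show "ix < length (xs@[y])" "iy < length (xs@[y])" using SI' by auto
          show "pairInv n m ((xs@[y])!ix) ((xs@[y])!iy)" using SI' nth_old by simp
          show "fx = DLB n ((xs@[y])!ix)" "fy = DLB n ((xs@[y])!iy)" using SI' nth_old by simp_all
          show "True \<longrightarrow> t < length (xs@[y]) \<and> (xs@[y])!t = bset m ((xs@[y])!ix) \<and> DLB n y = DLB n ((xs@[y])!t)"
            using nth_new nth_old SI' yb False unfolding u_def t_def by simp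
        qed
        have "Bnd n m True + 8 \<le> Psi n \<sigma>"
          unfolding PsiS Bnd_def using hv1 False km by (simp add: algebra_simps)
        then show ?thesis using R st True unfolding \<sigma>_def t_def by simp
      next
        case sT: True
        have st: "step n \<sigma> t (DLB n y) = sp n (m+1) False ixd fxd t (DLB n y) 0 0"
          unfolding step_def \<sigma>_def using True sz sT by (simp add: s_def)
        have xd: "ixd < length xs" "xs!ixd = bset m (xs!ix)" "fxd = DLB n (xs!ixd)" using SI'(8) sT by auto
        have R: "Inv n (xs@[y]) (sp n (m+1) False ixd fxd t (DLB n y) 0 0) \<and> Psi n (sp n (m+1) False ixd fxd t (DLB n y) 0 0) \<le> Bnd n (m+1) False"
        proof (rule sp_inv)
          show "\<forall>x\<in>set (xs@[y]). length x = n" by (rule lens')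
          show "even n" by (rule ev)
          show "2*(m+1) \<le> n" using B(3) by simp
          show "ixd < length (xs@[y])" "t < length (xs@[y])" using xd unfolding t_def by auto
          show "pairInv n (m+1) ((xs@[y])!ixd) ((xs@[y])!t)"
            using nth_old[OF xd(1)] nth_new xd(2) yb sT pI_next_c[OF SI'(5) SI'(1)] unfolding u_def by simp
          show "fxd = DLB n ((xs@[y])!ixd)" "DLB n y = DLB n ((xs@[y])!t)" using nth_old[OF xd(1)] nth_new xd(3) by simp_all
          show "False \<longrightarrow> 0 < length (xs@[y]) \<and> (xs@[y])!0 = bset (m+1) ((xs@[y])!ixd) \<and> 0 = DLB n ((xs@[y])!0)" by simp
        qed
        have "Bnd n (m+1) False + 8 \<le> Psi n \<sigma>"
          unfolding PsiS Bnd_def using hv1 sT by (simp add: algebra_simps)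
        then show ?thesis using R st True unfolding \<sigma>_def t_def by simp
      qed
    next
      case snz: False
      have st: "step n \<sigma> t (DLB n y) = Srch m side ix fx iy fy ixd fxd t s z"
        unfolding step_def \<sigma>_def using True snz by (simp add: s_def)
      have zle: "z \<le> s" using card_mono[OF dset_fin ZD] cDy B(8) by simp
      have sI: "searchInv n m u y s z"
        unfolding searchInv_def
      proof (intro conjI)
        show "dset n u y \<subseteq> {2*m..<n}" using DyU dset_sym by metis
        show "card (dset n u y) = s" using cDy dset_sym by metis
        show "Zs m u \<subseteq> dset n u y" using ZD dset_sym by metis
        have "dset n y u \<inter> Ws m u = {}" using DB by (auto simp: Ws_def Zs_def)
        then show "dset n u y = {2*m..<n} \<or> dset n u y \<inter> Ws m u = {}" using dset_sym by metis
        show "z = card (Zs m u)" by (rule B(8))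
        show "0 < z" by (rule B(9))
        show "z < s" using zle snz by simp
      qed
      have SI2: "SInv n (xs@[y]) m side ix fx iy fy ixd fxd t s z"
        using SInv_append[OF SI, of y] sI nth_new nth_old SI'(2,3) unfolding SInv_def u_def t_def by auto
      have inv2: "Inv n (xs@[y]) (Srch m side ix fx iy fy ixd fxd t s z)"
        unfolding Inv_def using lens' SI2 by simp
      have "Psi n (Srch m side ix fx iy fy ixd fxd t s z) + 8 = Psi n \<sigma>"
        unfolding PsiS using hvs by (simp add: Psi_def)
      then show ?thesis using inv2 st True unfolding \<sigma>_def t_def by simp
    qed
  qed
qed

lemma sum_if8: "finite A \<Longrightarrow> (\<Sum>y\<in>A. (if P y then 8 else 0::nat)) = 8 * card {y\<in>A. P y}"
proof -
  assume fin: "finite A"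
  have "(\<Sum>y\<in>A. (if P y then 8 else 0::nat)) = (\<Sum>y\<in>A \<inter> {y. P y}. 8)"
    using sum.If_cases[OF fin, of P "\<lambda>_. 8" "\<lambda>_. 0::nat"] by simp
  also have "\<dots> = 8 * card (A \<inter> {y. P y})" by simp
  also have "A \<inter> {y. P y} = {y\<in>A. P y}" by blast
  finally show ?thesis .
qed

lemma pmf_of_set_bound:
  fixes g :: "'a \<Rightarrow> nat"
  assumes fin: "finite A" and ne: "A \<noteq> {}"
    and pt: "\<And>y. y \<in> A \<Longrightarrow> g y + (if P y then 8 else 0) \<le> M"
    and cnt: "card A \<le> 8 * card {y\<in>A. P y}"
  shows "(\<integral>\<^sup>+ y. of_nat (g y) \<partial>measure_pmf (pmf_of_set A)) + 1 \<le> (of_nat M :: ennreal)"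
proof -
  define N where "N = card A"
  have Npos: "0 < N" using fin ne unfolding N_def by (simp add: card_gt_0_iff)
  have "(\<Sum>y\<in>A. g y + (if P y then 8 else 0)) \<le> (\<Sum>y\<in>A. M)" using pt by (rule sum_mono)
  then have "(\<Sum>y\<in>A. g y) + 8 * card {y\<in>A. P y} \<le> N * M"
    unfolding sum.distrib sum_if8[OF fin] N_def by simp
  then have key: "(\<Sum>y\<in>A. g y) + N \<le> N * M" using cnt unfolding N_def by linarith
  have I: "(\<integral>\<^sup>+ y. of_nat (g y) \<partial>measure_pmf (pmf_of_set A)) = ennreal (real (\<Sum>y\<in>A. g y) / real N)"
  proof -
    have "(\<integral>\<^sup>+ y. of_nat (g y) \<partial>measure_pmf (pmf_of_set A)) = (\<Sum>y\<in>A. (of_nat (g y) :: ennreal)) / of_nat (card A)"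
      by (rule nn_integral_pmf_of_set[OF ne fin])
    also have "\<dots> = ennreal (real (\<Sum>y\<in>A. g y)) / ennreal (real N)"
      unfolding N_def by (simp add: ennreal_of_nat_eq_real_of_nat)
    also have "\<dots> = ennreal (real (\<Sum>y\<in>A. g y) / real N)"
      using Npos by (intro divide_ennreal) (auto intro: sum_nonneg)
    finally show ?thesis .
  qed
  have "real (\<Sum>y\<in>A. g y) / real N + 1 \<le> real M"
  proof -
    have "real (\<Sum>y\<in>A. g y) + real N \<le> real N * real M" using key
      by (metis of_nat_add of_nat_le_iff of_nat_mult)
    then have "(real (\<Sum>y\<in>A. g y) + real N) / real N \<le> real M" using Npos
      by (simp add: divide_le_eq mult.commute)
    then show ?thesis using Npos by (simp add: add_divide_distrib)
  qed
  then have le: "ennreal (real (\<Sum>y\<in>A. g y) / real N + 1) \<le> ennreal (real M)" by simp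
  have nn: "0 \<le> real (\<Sum>y\<in>A. g y) / real N" by (simp add: sum_nonneg)
  have "ennreal (real (\<Sum>y\<in>A. g y) / real N) + 1 = ennreal (real (\<Sum>y\<in>A. g y) / real N + 1)"
    using ennreal_plus[OF nn, of 1] by simp
  then show ?thesis unfolding I using le by (simp add: ennreal_of_nat_eq_real_of_nat)
qed

lemma Outs_compl:
  assumes "length x0 = n"
  shows "Outs n 0 n x0 x0 = {map Not x0}"
proof
  show "Outs n 0 n x0 x0 \<subseteq> {map Not x0}"
  proof
    fix w assume w: "w \<in> Outs n 0 n x0 x0"
    have e: "dset n x0 x0 = {}" by (simp add: dset_def)
    then have lw: "length w = n" and cw: "card (dset n w x0) = n" using w by (auto simp: Outs_def bitstrings_def)
    have "dset n w x0 = {..<n}" using card_subset_eq[OF _ dset_sub] cw by simp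
    then have "w = flipS n x0 {..<n}" using flipS_dset[OF lw assms] by simp
    also have "\<dots> = map Not x0" using assms by (auto simp: flipS_def intro!: nth_equalityI)
    finally show "w \<in> {map Not x0}" by simp
  qed
  show "{map Not x0} \<subseteq> Outs n 0 n x0 x0"
  proof -
    have "dset n (map Not x0) x0 = {..<n}" using assms by (auto simp: dset_def)
    moreover have "dset n x0 x0 = {}" by (simp add: dset_def)
    ultimately show ?thesis using assms by (simp add: Outs_def bitstrings_def)
  qed
qed

lemma Fl_compl: "length x0 = n \<Longrightarrow> Fl n 0 n [x0, x0] = return_pmf (map Not x0)"
  unfolding Fl_def using Outs_compl[of x0 n] by (simp add: pmf_of_set_singleton)

lemma pI_init: "length x0 = n \<Longrightarrow> pairInv n 0 x0 (map Not x0)"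
  by (simp add: pairInv_def)

definition Phi :: "nat \<Rightarrow> bool list list \<Rightarrow> nat" where
  "Phi n xs = (if replicate n True \<in> set xs then 0 else Psi n (S n (map (DLB n) xs)))"

definition Good :: "nat \<Rightarrow> bool list list \<Rightarrow> bool" where
  "Good n xs = (xs \<noteq> [] \<and> (\<forall>x\<in>set xs. length x = n) \<and> (replicate n True \<in> set xs \<or> Inv n xs (S n (map (DLB n) xs))))"

definition Kn :: "nat \<Rightarrow> bool list list \<Rightarrow> bool list list pmf" where
  "Kn n xs = map_pmf (\<lambda>y. xs @ [y]) (fst (Alg n (map (DLB n) xs)) (map ((!) xs) (snd (Alg n (map (DLB n) xs)))))"

lemma supp_bits:
  assumes "xs \<noteq> []" "\<forall>x\<in>set xs. length x = n"
  shows "set_pmf (fst (Alg n (map (DLB n) xs)) (map ((!) xs) (snd (Alg n (map (DLB n) xs))))) \<subseteq> bitstrings n"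
proof -
  let ?h = "map (DLB n) xs"
  have h: "?h \<noteq> []" using assms(1) by simp
  have v: "unbiased_op n 2 (fst (Alg n ?h)) \<and> length (snd (Alg n ?h)) = 2 \<and> (\<forall>i\<in>set (snd (Alg n ?h)). i < length ?h)"
    using valid_Alg[of n] h unfolding valid_alg_def by blast
  have "set (map ((!) xs) (snd (Alg n ?h))) \<subseteq> bitstrings n"
    using v assms(2) by (auto simp: bitstrings_def)
  then show ?thesis using v unfolding unbiased_op_def by auto
qed

lemma Phi_le: "Phi n xs \<le> Psi n (S n (map (DLB n) xs))" by (simp add: Phi_def)

lemma one_step:
  assumes ev: "even n" and G: "Good n xs"
  shows "(\<forall>zs\<in>set_pmf (Kn n xs). Good n zs) \<and>
         (\<integral>\<^sup>+ zs. of_nat (Phi n zs) \<partial>measure_pmf (Kn n xs)) + indicator {xs. replicate n True \<notin> set xs} xs \<le> of_nat (Phi n xs)"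
proof -
  let ?h = "map (DLB n) xs"
  let ?\<sigma> = "S n ?h"
  have ne: "xs \<noteq> []" and lens: "\<forall>x\<in>set xs. length x = n" using G by (auto simp: Good_def)
  have hne: "?h \<noteq> []" using ne by simp
  have Snext: "\<And>y. S n (map (DLB n) (xs @ [y])) = step n ?\<sigma> (length xs) (DLB n y)"
    using S_snoc[OF hne] by simp
  have setK: "set_pmf (Kn n xs) = (\<lambda>y. xs @ [y]) ` set_pmf (fst (Alg n ?h) (map ((!) xs) (snd (Alg n ?h))))"
    unfolding Kn_def by simp
  have bits: "\<And>y. y \<in> set_pmf (fst (Alg n ?h) (map ((!) xs) (snd (Alg n ?h)))) \<Longrightarrow> length y = n"
    using supp_bits[OF ne lens] by (auto simp: bitstrings_def)
  show ?thesis
  proof (cases "replicate n True \<in> set xs")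
    case True
    have g: "\<forall>zs\<in>set_pmf (Kn n xs). Good n zs"
      using True bits lens unfolding setK Good_def by auto
    have "\<And>zs. zs \<in> set_pmf (Kn n xs) \<Longrightarrow> Phi n zs = 0" using True unfolding setK Phi_def by auto
    then have "(\<integral>\<^sup>+ zs. of_nat (Phi n zs) \<partial>measure_pmf (Kn n xs)) = (\<integral>\<^sup>+ zs. 0 \<partial>measure_pmf (Kn n xs))"
      by (intro nn_integral_cong_AE AE_pmfI) simp
    then show ?thesis using g True by simp
  next
    case unsolved: False
    have inv: "Inv n xs ?\<sigma>" using G unsolved by (simp add: Good_def)
    have PhiS: "Phi n xs = Psi n ?\<sigma>" using unsolved by (simp add: Phi_def)
    show ?thesis
    proof (cases ?\<sigma>)
      case Done
      then show ?thesis using inv unsolved by (simp add: Inv_def)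
    next
      case (Init f0)
      then have l1: "length xs = 1" and f0: "f0 = DLB n (xs!0)" using inv by (auto simp: Inv_def)
      then obtain x0 where xs: "xs = [x0]" by (cases xs) auto
      have lx: "length x0 = n" using lens xs by simp
      have A: "Alg n ?h = (Fl n 0 n, [0,0])" unfolding Alg_def act_def using Init xs by simp
      have K: "Kn n xs = return_pmf [x0, map Not x0]"
        unfolding Kn_def A using xs Fl_compl[OF lx] by simp
      let ?xs' = "[x0, map Not x0]"
      have st: "S n (map (DLB n) ?xs') = sp n 0 False 0 f0 1 (DLB n (map Not x0)) 0 0"
        using Snext[of "map Not x0"] Init xs by (simp add: step_def)
      have R: "Inv n ?xs' (sp n 0 False 0 f0 1 (DLB n (map Not x0)) 0 0) \<and>
               Psi n (sp n 0 False 0 f0 1 (DLB n (map Not x0)) 0 0) \<le> Bnd n 0 False"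
        by (rule sp_inv) (use lx ev f0 xs pI_init[OF lx] in auto)
      have lens': "\<forall>x\<in>set ?xs'. length x = n" using lx by simp
      have g: "Good n ?xs'" unfolding Good_def using R st lens' by simp
      have "Phi n ?xs' \<le> Bnd n 0 False" using R st Phi_le[of n ?xs'] by simp
      moreover have "Psi n ?\<sigma> = Bnd n 0 False + 1" using Init by (simp add: Psi_def Bnd_def KK_def)
      ultimately have "Phi n ?xs' + 1 \<le> Phi n xs" using PhiS by simp
      then have "(of_nat (Phi n ?xs' + 1) :: ennreal) \<le> of_nat (Phi n xs)"
        by (simp only: of_nat_le_iff)
      then have "(of_nat (Phi n ?xs') :: ennreal) + 1 \<le> of_nat (Phi n xs)" by (simp add: add.commute)
      then show ?thesis using K g unsolved by simp
    next
      case (Srch m side ix fx iy fy ixd fxd ic c z)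
      have SI: "SInv n xs m side ix fx iy fy ixd fxd ic c z" using inv Srch by (simp add: Inv_def)
      then have idx: "ix < length xs" "iy < length xs" "ic < length xs" by (auto simp: SInv_def)
      let ?u = "if side then xs!iy else xs!ix"
      let ?s = "(c+1) div 2"
      let ?O = "Outs n ?s 0 ?u (xs!ic)"
      have inv': "Inv n xs (Srch m side ix fx iy fy ixd fxd ic c z)" using inv Srch by simp
      have A: "Alg n ?h = (Fl n ?s 0, [if side then iy else ix, ic])"
        unfolding Alg_def act_def using Srch idx by simp
      have cnt: "?O \<noteq> {}" "card ?O \<le> 8 * card {y \<in> ?O. 2*m+2 \<le> DLB n y}"
        using srch_count[OF ev inv'] by simp_all
      have fin: "finite ?O" by (rule finite_Outs)
      have V: "fst (Alg n ?h) (map ((!) xs) (snd (Alg n ?h))) = pmf_of_set ?O"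
        unfolding A using cnt(1) by (cases side) (simp_all add: Fl_def)
      have K: "Kn n xs = map_pmf (\<lambda>y. xs @ [y]) (pmf_of_set ?O)" unfolding Kn_def V ..
      have nxt: "\<And>y. y \<in> ?O \<Longrightarrow> Inv n (xs@[y]) (S n (map (DLB n) (xs@[y]))) \<and>
          Psi n (S n (map (DLB n) (xs@[y]))) + (if 2*m+2 \<le> DLB n y then 8 else 0) \<le> Psi n ?\<sigma>"
        using srch_next[OF ev inv'] Snext Srch by simp
      have ptw: "\<And>y. y \<in> ?O \<Longrightarrow> Phi n (xs@[y]) + (if 2*m+2 \<le> DLB n y then 8 else 0) \<le> Psi n ?\<sigma>"
        using nxt Phi_le by (meson add_le_mono1 order_trans)
      have I: "(\<integral>\<^sup>+ y. of_nat (Phi n (xs@[y])) \<partial>measure_pmf (pmf_of_set ?O)) + 1 \<le> (of_nat (Psi n ?\<sigma>) :: ennreal)"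
        by (rule pmf_of_set_bound[OF fin cnt(1) ptw cnt(2)])
      have setO: "set_pmf (pmf_of_set ?O) = ?O" using fin cnt(1) by simp
      have lensO: "\<And>y. y \<in> ?O \<Longrightarrow> length y = n" by (simp add: Outs_def bitstrings_def)
      have g: "\<forall>zs\<in>set_pmf (Kn n xs). Good n zs"
        unfolding K using setO nxt lensO lens by (auto simp: Good_def)
      show ?thesis using I g unsolved PhiS unfolding K by (simp add: nn_integral_map_pmf)
    qed
  qed
qed

lemma Kn_eq: "Kn n = (\<lambda>xs. map_pmf (\<lambda>y. xs @ [y]) (fst (Alg n (map (DLB n) xs)) (map ((!) xs) (snd (Alg n (map (DLB n) xs))))))"
  by (rule ext) (simp add: Kn_def)

lemma hist_Suc_K: "hist n (DLB n) (Alg n) (Suc t) = bind_pmf (hist n (DLB n) (Alg n) t) (Kn n)"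
  by (simp only: Kn_eq hist.simps)

lemma bits_ne: "bitstrings n \<noteq> {}"
proof -
  have "replicate n True \<in> bitstrings n" by (simp add: bitstrings_def)
  then show ?thesis by blast
qed

lemma hist_good: "even n \<Longrightarrow> xs \<in> set_pmf (hist n (DLB n) (Alg n) t) \<Longrightarrow> Good n xs"
proof (induction t arbitrary: xs)
  case 0
  then obtain x where x: "x \<in> bitstrings n" "xs = [x]"
    using finite_bitstrings bits_ne by auto
  then show ?case by (simp add: Good_def S_single Inv_def bitstrings_def)
next
  case (Suc t)
  then obtain ys where ys: "ys \<in> set_pmf (hist n (DLB n) (Alg n) t)" "xs \<in> set_pmf (Kn n ys)"
    unfolding hist_Suc_K by auto
  then show ?case using Suc.IH[OF Suc.prems(1) ys(1)] one_step[OF Suc.prems(1)] by blast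
qed

definition EE :: "nat \<Rightarrow> nat \<Rightarrow> ennreal" where
  "EE n t = (\<integral>\<^sup>+ xs. of_nat (Phi n xs) \<partial>measure_pmf (hist n (DLB n) (Alg n) t))"

definition UU :: "nat \<Rightarrow> nat \<Rightarrow> ennreal" where
  "UU n t = ennreal (measure_pmf.prob (hist n (DLB n) (Alg n) t) {xs. \<forall>x\<in>set xs. \<not> is_opt n (DLB n) x})"

lemma UU_int: "even n \<Longrightarrow> UU n t = (\<integral>\<^sup>+ xs. indicator {xs. replicate n True \<notin> set xs} xs \<partial>measure_pmf (hist n (DLB n) (Alg n) t))"
proof -
  assume ev: "even n"
  have "{xs. \<forall>x\<in>set xs. \<not> is_opt n (DLB n) x} = {xs. replicate n True \<notin> set xs}"
    using is_opt_DLB[OF ev] by auto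
  then show ?thesis unfolding UU_def by (simp add: measure_pmf.emeasure_eq_measure)
qed

lemma EE_step: "even n \<Longrightarrow> EE n (Suc t) + UU n t \<le> EE n t"
proof -
  assume ev: "even n"
  let ?M = "measure_pmf (hist n (DLB n) (Alg n) t)"
  have "EE n (Suc t) = (\<integral>\<^sup>+ xs. (\<integral>\<^sup>+ zs. of_nat (Phi n zs) \<partial>measure_pmf (Kn n xs)) \<partial>?M)"
    unfolding EE_def hist_Suc_K by simp
  then have "EE n (Suc t) + UU n t = (\<integral>\<^sup>+ xs. (\<integral>\<^sup>+ zs. of_nat (Phi n zs) \<partial>measure_pmf (Kn n xs)) + indicator {xs. replicate n True \<notin> set xs} xs \<partial>?M)"
    using UU_int[OF ev] by (simp add: nn_integral_add)
  also have "\<dots> \<le> (\<integral>\<^sup>+ xs. of_nat (Phi n xs) \<partial>?M)"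
  proof (rule nn_integral_mono_AE, rule AE_pmfI)
    fix xs assume "xs \<in> set_pmf (hist n (DLB n) (Alg n) t)"
    then have "Good n xs" using hist_good[OF ev] by blast
    then show "(\<integral>\<^sup>+ zs. of_nat (Phi n zs) \<partial>measure_pmf (Kn n xs)) + indicator {xs. replicate n True \<notin> set xs} xs \<le> of_nat (Phi n xs)"
      using one_step[OF ev] by blast
  qed
  finally show ?thesis unfolding EE_def .
qed

lemma EE_tele: "even n \<Longrightarrow> EE n t + (\<Sum>s<t. UU n s) \<le> EE n 0"
proof (induction t)
  case 0 then show ?case by simp
next
  case (Suc t)
  have "EE n (Suc t) + (\<Sum>s<Suc t. UU n s) = (EE n (Suc t) + UU n t) + (\<Sum>s<t. UU n s)"
    by (simp add: algebra_simps)
  also have "\<dots> \<le> EE n t + (\<Sum>s<t. UU n s)" using EE_step[OF Suc.prems] by (rule add_right_mono)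
  also have "\<dots> \<le> EE n 0" by (rule Suc.IH[OF Suc.prems])
  finally show ?case .
qed

lemma EE0: "EE n 0 \<le> of_nat (16 * HH n * KK n + 1)"
proof -
  have "EE n 0 = (\<integral>\<^sup>+ x. of_nat (Phi n [x]) \<partial>measure_pmf (pmf_of_set (bitstrings n)))"
    unfolding EE_def by simp
  also have "\<dots> \<le> (\<integral>\<^sup>+ x. of_nat (16 * HH n * KK n + 1) \<partial>measure_pmf (pmf_of_set (bitstrings n)))"
  proof (rule nn_integral_mono)
    fix x
    have "Phi n [x] \<le> 16 * HH n * KK n + 1"
      using Phi_le[of n "[x]"] by (simp add: S_single Psi_def)
    then show "(of_nat (Phi n [x]) :: ennreal) \<le> of_nat (16 * HH n * KK n + 1)" by (simp only: of_nat_le_iff)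
  qed
  also have "\<dots> = of_nat (16 * HH n * KK n + 1)"
    by (simp add: measure_pmf.emeasure_space_1)
  finally show ?thesis .
qed

lemma runtime_bound: "even n \<Longrightarrow> exp_runtime n (DLB n) (Alg n) \<le> of_nat (16 * HH n * KK n + 2)"
proof -
  assume ev: "even n"
  have "\<And>t. (\<Sum>s<t. UU n s) \<le> EE n 0"
    using EE_tele[OF ev] by (meson add_increasing zero_le order_trans order_refl)
  then have "(\<Sum>s. UU n s) \<le> EE n 0" by (intro suminf_le_const) auto
  then have "(\<Sum>s. UU n s) \<le> of_nat (16 * HH n * KK n + 1)" using EE0 by (rule order_trans)
  then have "1 + (\<Sum>s. UU n s) \<le> 1 + (of_nat (16 * HH n * KK n + 1) :: ennreal)" by (rule add_left_mono)
  then show ?thesis unfolding exp_runtime_def UU_def by (simp add: add.commute)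
qed

lemma HH_log:
  assumes n2: "2 \<le> n"
  shows "real (HH n) \<le> 4 * ln (real n)"
proof -
  have p: "2 ^ HH n \<le> 2*n - 2" unfolding HH_def by (rule hv_pow[OF n2])
  have q0: "2 * n \<le> n * n" using mult_le_mono1[OF n2, of n] .
  have q: "2*n - 2 \<le> n^2" using q0 unfolding power2_eq_square by linarith
  have r: "(2::real) ^ HH n \<le> real n ^ 2"
  proof -
    have "2 ^ HH n \<le> n^2" using p q by linarith
    then have "real (2 ^ HH n) \<le> real (n^2)" by (simp only: of_nat_le_iff)
    then show ?thesis by simp
  qed
  have e1: "exp (real (HH n) * (1/2)) = exp (1/2) ^ HH n" by (rule exp_of_nat_mult)
  have e2: "exp (1/2) ^ HH n \<le> (2::real) ^ HH n" by (rule power_mono[OF exp_half_le2]) simp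
  have npos: "0 < real n" using n2 by simp
  have e3: "exp (real 2 * ln (real n)) = real n ^ 2"
    using exp_of_nat_mult[of 2 "ln (real n)"] exp_ln[OF npos] by simp
  have "exp (real (HH n) * (1/2)) \<le> exp (real 2 * ln (real n))" using e1 e2 r e3 by simp
  then have "real (HH n) * (1/2) \<le> 2 * ln (real n)" by simp
  then show ?thesis by simp
qed

lemma ln_half: "2 \<le> n \<Longrightarrow> 1/2 \<le> ln (real n)"
proof -
  assume n2: "2 \<le> n"
  have "exp (1/2) \<le> real n" using exp_half_le2 n2 by linarith
  then have "ln (exp (1/2)) \<le> ln (real n)" using n2 by (subst ln_le_cancel_iff) auto
  then show ?thesis by simp
qed

theorem theorem18:
  shows "\<exists>C::real. C > 0 \<and> (\<exists>N::nat. \<forall>n::nat. n \<ge> N \<and> even n \<longrightarrow>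
           unbiased_bbc 2 n (DLB n) \<le> ennreal (C * real n * ln (real n)))"
proof (intro exI conjI allI impI)
  show "(33::real) > 0" by simp
  fix n :: nat assume h: "4 \<le> n \<and> even n"
  then have ev: "even n" and n4: "4 \<le> n" by auto
  have "unbiased_bbc 2 n (DLB n) \<le> exp_runtime n (DLB n) (Alg n)"
    unfolding unbiased_bbc_def by (rule INF_lower) (simp add: valid_Alg)
  also have "\<dots> \<le> of_nat (16 * HH n * KK n + 2)" by (rule runtime_bound[OF ev])
  also have "\<dots> \<le> ennreal (33 * real n * ln (real n))"
  proof -
    have K: "2 * KK n = n" using ev by (simp add: KK_def)
    have H: "real (HH n) \<le> 4 * ln (real n)" using HH_log n4 by simp
    have L: "1/2 \<le> ln (real n)" using ln_half n4 by simp
    have "real (16 * HH n * KK n + 2) = 8 * real n * real (HH n) + 2"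
    proof -
      have "16 * HH n * KK n = 8 * HH n * (2 * KK n)" by (simp add: algebra_simps)
      then have e: "16 * HH n * KK n + 2 = 8 * n * HH n + 2" using K by (simp add: algebra_simps)
      show ?thesis unfolding e by simp
    qed
    also have "\<dots> \<le> 8 * real n * (4 * ln (real n)) + 2"
      using H by (intro add_right_mono mult_left_mono) auto
    also have "\<dots> \<le> 33 * real n * ln (real n)"
    proof -
      have "2 \<le> real n * ln (real n)"
      proof -
        have "4 * (1/2) \<le> real n * ln (real n)" using n4 L by (intro mult_mono) auto
        then show ?thesis by simp
      qed
      then show ?thesis by simp
    qed
    finally have "real (16 * HH n * KK n + 2) \<le> 33 * real n * ln (real n)" .
    then have "ennreal (real (16 * HH n * KK n + 2)) \<le> ennreal (33 * real n * ln (real n))" by (rule ennreal_leI)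
    then show ?thesis by (simp only: ennreal_of_nat_eq_real_of_nat)
  qed
  finally show "unbiased_bbc 2 n (DLB n) \<le> ennreal (33 * real n * ln (real n))" .
qed

end
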